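(* Let $\{X_t\}$ be a Geo-INAR(1) process with $\mu>0$, $\alpha\in(0,1)$, $\mu_\varepsilon=(1-\alpha)\mu$. Then the joint probability generating function of $(X_t,X_{t-1})$ is, for $s_1,s_2$ in a neighbourhood of $[0,1]$, $$E\big(s_1^{X_t}s_2^{X_{t-1}}\big)=\frac{1}{1+\mu\big[(1-s_1)+(1-s_2)+(\mu_\varepsilon-\alpha)(1-s_1)(1-s_2)\big]},$$ which is symmetric in $(s_1,s_2)$; hence $(X_t,X_{t-1})\overset{d}{=}(X_{t-1},X_t)$ and the process is time-reversible, i.e. for all $n$ and times $t_1<\dots<t_n$, $(X_{t_1},\dots,X_{t_n})\overset{d}{=}(X_{t_n},\dots,X_{t_1})$ (up to the corresponding time shift).
   Context: Geo-INAR(1) process: fix $\mu>0$, $\alpha\in(0,1)$, $\mu_\varepsilon=(1-\alpha)\mu$, $\pi=1-\alpha/\mu_\varepsilon$. Let $\{\varepsilon_t\}$ be i.i.d. $\mathrm{Geo}(\mu_\varepsilon)$ and, for each $t$, let $\{G_{t,i}\}_{i\ge1}$ be i.i.d. $\mathrm{ZMG}(\pi,\mu_\varepsilon)$, all mutually independent. The process is the Markov chain $X_t=\sum_{i=1}^{X_{t-1}}G_{t,i}+\varepsilon_t$, with $\varepsilon_t$ independent of $X_{t-h}$ for $h\ge1$, and $X_t\sim\mathrm{Geo}(\mu)$ for all $t$ (stationary). $\mathrm{Geo}(m)$ has $P(k)=\frac{m^k}{(1+m)^{k+1}}$; $\mathrm{ZMG}(\pi,m)$ has $P(0)=\pi+\frac{1-\pi}{1+m}$,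 $P(k)=(1-\pi)\frac{m^k}{(1+m)^{k+1}}$, $k\ge1$. *)

theory Defs
  imports "HOL-Probability.Probability"
begin

definition geo_p :: "real \<Rightarrow> nat \<Rightarrow> real" where
  "geo_p m k = m ^ k / (1 + m) ^ (k + 1)"

definition zmg_p :: "real \<Rightarrow> real \<Rightarrow> nat \<Rightarrow> real" where
  "zmg_p p m k = (if k = 0 then p + (1 - p) / (1 + m) else (1 - p) * m ^ k / (1 + m) ^ (k + 1))"

definition geo_inar1 ::
  "'w measure \<Rightarrow> real \<Rightarrow> real \<Rightarrow> (int \<Rightarrow> 'w \<Rightarrow> nat) \<Rightarrow> (int \<Rightarrow> nat \<Rightarrow> 'w \<Rightarrow> nat)
     \<Rightarrow> (int \<Rightarrow> 'w \<Rightarrow> nat) \<Rightarrow> bool" where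
  "geo_inar1 M mu alpha eps G X \<longleftrightarrow>
     (let mu_e = (1 - alpha) * mu; p = 1 - alpha / mu_e in
      prob_space M \<and>
      (\<forall>t. X t \<in> measurable M (count_space UNIV)) \<and>
      (\<forall>t. eps t \<in> measurable M (count_space UNIV)) \<and>
      (\<forall>t i. G t i \<in> measurable M (count_space UNIV)) \<and>
      (\<forall>t k. measure M {w \<in> space M. eps t w = k} = geo_p mu_e k) \<and>
      (\<forall>t i k. i \<ge> 1 \<longrightarrow> measure M {w \<in> space M. G t i w = k} = zmg_p p mu_e k) \<and>
      prob_space.indep_vars M (\<lambda>_. count_space UNIV)
        (\<lambda>j. case j of Inl t \<Rightarrow> eps t | Inr (t, i) \<Rightarrow> G t i)
        (range Inl \<union> Inr ` (UNIV \<times> {1..})) \<and>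
      (\<forall>t. \<forall>w\<in>space M. X t w = (\<Sum>i = 1..X (t - 1) w. G t i w) + eps t w) \<and>
      (\<forall>t (k::nat). prob_space.indep_var M (count_space UNIV) (\<lambda>w. [eps t w])
             (count_space UNIV) (\<lambda>w. map (\<lambda>h. X (t - int h) w) [1..<k + 1])) \<and>
      (\<forall>t k. measure M {w \<in> space M. X t w = k} = geo_p mu k))"

end

theory Submission
  imports Defs
begin

lemma geo_p_alt: "m \<ge> 0 \<Longrightarrow> geo_p m k = (1/(1+m)) * (m/(1+m))^k"
  by (simp add: geo_p_def power_divide)

lemma geo_p_nonneg: "m \<ge> 0 \<Longrightarrow> geo_p m k \<ge> 0"
  by (simp add: geo_p_def)

lemma geo_p_pos: "m > 0 \<Longrightarrow> geo_p m k > 0"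
  by (simp add: geo_p_def)

lemma geo_pgf_sums:
  fixes m s :: real
  assumes m: "m \<ge> 0" and s: "\<bar>s\<bar> * m < 1 + m"
  shows "(\<lambda>k. geo_p m k * s^k) sums (1/(1 + m*(1-s)))"
proof -
  have z: "norm (m * s / (1 + m)) < 1" using m s
    by (simp add: abs_mult abs_divide field_simps mult.commute)
  have "(\<lambda>k. (1/(1+m)) * (m * s / (1 + m))^k) sums ((1/(1+m)) * (1/(1 - m * s / (1 + m))))"
    by (intro sums_mult geometric_sums z)
  moreover have "(1/(1+m)) * (1/(1 - m * s / (1 + m))) = 1/(1 + m*(1-s))"
    using m s by (simp add: field_simps)
  moreover have "(1/(1+m)) * (m * s / (1 + m))^k = geo_p m k * s^k" for k
    using m by (simp add: geo_p_alt power_mult_distrib power_divide)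
  ultimately show ?thesis by simp
qed

lemma geo_mean_sums:
  fixes m :: real
  assumes m: "m \<ge> 0"
  shows "(\<lambda>k. geo_p m k * real k) sums m"
proof -
  have z: "norm (m/(1+m)) < 1" using m by simp
  have "(\<lambda>k. (1/(1+m)) * ((m/(1+m))^k * of_nat k)) sums ((1/(1+m)) * ((m/(1+m)) / (1 - m/(1+m))\<^sup>2))"
    by (intro sums_mult geometric_sums_times_n z)
  moreover have "(1/(1+m)) * ((m/(1+m)) / (1 - m/(1+m))\<^sup>2) = m"
  proof -
    have h: "1 - m/(1+m) = 1/(1+m)" using m by (simp add: field_simps)
    have "1 + m > 0" using m by simp
    then show ?thesis unfolding h by (simp add: power2_eq_square)
  qed
  moreover have "(1/(1+m)) * ((m/(1+m))^k * of_nat k) = geo_p m k * real k" for k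
    using m by (simp add: geo_p_alt)
  ultimately show ?thesis by simp
qed

lemma zmg_p_alt: "zmg_p p m k = (if k = 0 then p else 0) + (1-p) * geo_p m k"
  by (simp add: zmg_p_def geo_p_def)

lemma zmg_pgf_sums:
  fixes m s p :: real
  assumes m: "m \<ge> 0" and s: "\<bar>s\<bar> * m < 1 + m"
  shows "(\<lambda>k. zmg_p p m k * s^k) sums (p + (1-p)/(1 + m*(1-s)))"
proof -
  have "(\<lambda>k. (if k = 0 then p else 0) * s^k + (1-p) * (geo_p m k * s^k)) sums (p + (1-p) * (1/(1 + m*(1-s))))"
  proof (intro sums_add sums_mult geo_pgf_sums m s)
    have "(\<lambda>k. (if k = 0 then p else 0) * s^k) = (\<lambda>k. if k = 0 then p else 0)"
      by (auto simp: fun_eq_iff)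
    then show "(\<lambda>k. (if k = 0 then p else 0) * s^k) sums p"
      using sums_single[of 0 "\<lambda>_. p"] by simp
  qed
  then show ?thesis by (simp add: zmg_p_alt algebra_simps)
qed

lemma zmg_mean_sums:
  fixes m p :: real
  assumes m: "m \<ge> 0"
  shows "(\<lambda>k. zmg_p p m k * real k) sums ((1-p)*m)"
proof -
  have "(\<lambda>k. (1-p) * (geo_p m k * real k)) sums ((1-p)*m)"
    by (intro sums_mult geo_mean_sums m)
  moreover have "(\<lambda>k. zmg_p p m k * real k) = (\<lambda>k. (1-p) * (geo_p m k * real k))"
  proof
    fix k show "zmg_p p m k * real k = (1-p) * (geo_p m k * real k)"
      by (cases "k = 0") (simp_all add: zmg_p_alt)
  qed
  ultimately show ?thesis by simp
qed

lemma powser_unique_zero: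
  fixes d :: "nat \<Rightarrow> real"
  assumes r: "r > 0" and S: "\<And>x. \<bar>x\<bar> < r \<Longrightarrow> (\<lambda>n. d n * x^n) sums 0"
  shows "d n = 0"
proof (induction n rule: less_induct)
  case (less n)
  have *: "(\<lambda>m. d (m+n) * x^m) sums 0" if x: "x \<noteq> 0" "norm x < r" for x
  proof -
    have "(\<lambda>m. d (m+n) * x^(m+n)) sums (0 - (\<Sum>i<n. d i * x^i))"
      using S[of x] x by (subst sums_iff_shift) simp
    also have "(\<Sum>i<n. d i * x^i) = 0" using less by simp
    finally have "(\<lambda>m. d (m+n) * x^(m+n)) sums 0" by simp
    then have "(\<lambda>m. (1/x^n) * (d (m+n) * x^(m+n))) sums ((1/x^n) * 0)"
      by (intro sums_mult) simp
    then show ?thesis using x by (simp add: power_add)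
  qed
  have "((\<lambda>_. 0::real) \<longlongrightarrow> d (0 + n)) (at (0::real))"
    using powser_limit_0_strong[OF r, where a="\<lambda>m. d (m+n)" and f="\<lambda>_. 0::real", OF *] by simp
  then show ?case
    using tendsto_unique[OF at_neq_bot tendsto_const] by fastforce
qed

lemma powser_unique:
  fixes a b :: "nat \<Rightarrow> real"
  assumes r: "r > 0" and S: "\<And>x. \<bar>x\<bar> < r \<Longrightarrow> (\<lambda>n. a n * x^n) sums f x"
    and T: "\<And>x. \<bar>x\<bar> < r \<Longrightarrow> (\<lambda>n. b n * x^n) sums f x"
  shows "a = b"
proof
  fix n
  have "(\<lambda>n. a n * x^n - b n * x^n) sums (f x - f x)" if "\<bar>x\<bar> < r" for x
    using S T that by (intro sums_diff)
  then have "(a - b) n = 0"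
    by (intro powser_unique_zero[OF r]) (auto simp: algebra_simps)
  then show "a n = b n" by simp
qed

lemma powser2_unique:
  fixes c d :: "nat \<times> nat \<Rightarrow> real"
  assumes r: "r > 0"
    and C: "\<And>x y. \<bar>x\<bar> < r \<Longrightarrow> \<bar>y\<bar> < r \<Longrightarrow> Infinite_Set_Sum.abs_summable_on (\<lambda>(a,b). c (a,b) * x^a * y^b) UNIV"
    and D: "\<And>x y. \<bar>x\<bar> < r \<Longrightarrow> \<bar>y\<bar> < r \<Longrightarrow> Infinite_Set_Sum.abs_summable_on (\<lambda>(a,b). d (a,b) * x^a * y^b) UNIV"
    and E: "\<And>x y. \<bar>x\<bar> < r \<Longrightarrow> \<bar>y\<bar> < r \<Longrightarrow>
        (\<Sum>\<^sub>a(a,b)\<in>UNIV. c (a,b) * x^a * y^b) = (\<Sum>\<^sub>a(a,b)\<in>UNIV. d (a,b) * x^a * y^b)"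
  shows "c = d"
proof -
  have row: "Infinite_Set_Sum.abs_summable_on (\<lambda>b. c (a,b) * y^b) UNIV \<and> Infinite_Set_Sum.abs_summable_on (\<lambda>b. d (a,b) * y^b) UNIV
     \<and> (\<Sum>\<^sub>ab. c (a,b) * y^b) = (\<Sum>\<^sub>ab. d (a,b) * y^b)" if y: "\<bar>y\<bar> < r" for a y
  proof -
    define F where "F c a = (\<Sum>\<^sub>ab. c (a,b) * y^b)" for c :: "nat \<times> nat \<Rightarrow> real" and a
    have key: "(\<lambda>a. F c a * x^a) sums (\<Sum>\<^sub>a(a,b)\<in>UNIV. c (a,b) * x^a * y^b)"
      if CC: "\<And>x. \<bar>x\<bar> < r \<Longrightarrow> Infinite_Set_Sum.abs_summable_on (\<lambda>(a,b). c (a,b) * x^a * y^b) UNIV" and x: "\<bar>x\<bar> < r"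
      for c :: "nat \<times> nat \<Rightarrow> real" and x
    proof -
      have cs: "Infinite_Set_Sum.abs_summable_on (\<lambda>(a,b). c (a,b) * x^a * y^b) (Sigma UNIV (\<lambda>_. UNIV))"
        using CC[OF x] by simp
      have eq: "(\<Sum>\<^sub>a(a,b)\<in>UNIV. c (a,b) * x^a * y^b) = (\<Sum>\<^sub>aa. \<Sum>\<^sub>ab. c (a,b) * x^a * y^b)"
        using infsetsum_Sigma'[OF countableI_type countableI_type cs] by simp
      have "(\<Sum>\<^sub>ab. c (a,b) * x^a * y^b) = F c a * x^a" for a
      proof -
        have "(\<lambda>b. c (a,b) * x^a * y^b) = (\<lambda>b. (c (a,b) * y^b) * x^a)"
          by (auto simp: fun_eq_iff algebra_simps)
        then show ?thesis unfolding F_def infsetsum_def by simp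
      qed
      moreover have "Infinite_Set_Sum.abs_summable_on (\<lambda>a. \<Sum>\<^sub>ab. c (a,b) * x^a * y^b) UNIV"
        using abs_summable_on_Sigma_project1'[OF cs countableI_type countableI_type] by simp
      ultimately have "(\<lambda>a. F c a * x^a) sums (\<Sum>\<^sub>aa. \<Sum>\<^sub>ab. c (a,b) * x^a * y^b)"
        using sums_infsetsum_nat[of "\<lambda>a. \<Sum>\<^sub>ab. c (a,b) * x^a * y^b" UNIV] by simp
      then show ?thesis using eq by simp
    qed
    have "F c = F d"
    proof (rule powser_unique[OF r, where f = "\<lambda>x. (\<Sum>\<^sub>a(a,b)\<in>UNIV. c (a,b) * x^a * y^b)"])
      fix x :: real assume x: "\<bar>x\<bar> < r"
      show "(\<lambda>n. F c n * x^n) sums (\<Sum>\<^sub>a(a,b)\<in>UNIV. c (a,b) * x^a * y^b)"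
        by (rule key) (auto intro: C y x)
      have "(\<lambda>n. F d n * x^n) sums (\<Sum>\<^sub>a(a,b)\<in>UNIV. d (a,b) * x^a * y^b)"
        by (rule key) (auto intro: D y x)
      then show "(\<lambda>n. F d n * x^n) sums (\<Sum>\<^sub>a(a,b)\<in>UNIV. c (a,b) * x^a * y^b)"
        using E[OF x y] by simp
    qed
    moreover have rs: "Infinite_Set_Sum.abs_summable_on (\<lambda>b. c (a,b) * y^b) UNIV" if CC: "\<And>x. \<bar>x\<bar> < r \<Longrightarrow> Infinite_Set_Sum.abs_summable_on (\<lambda>(a,b). c (a,b) * x^a * y^b) UNIV"
      for c :: "nat \<times> nat \<Rightarrow> real"
    proof -
      have x: "\<bar>r/2\<bar> < r" using r by simp
      have cs: "Infinite_Set_Sum.abs_summable_on (\<lambda>(a,b). c (a,b) * (r/2)^a * y^b) (Sigma UNIV (\<lambda>_. UNIV))"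
        using CC[OF x] by simp
      have "Infinite_Set_Sum.abs_summable_on (\<lambda>b. c (a,b) * (r/2)^a * y^b) UNIV"
        using abs_summable_on_Sigma_project2[OF cs, of a, simplified] by simp
      then have A: "Infinite_Set_Sum.abs_summable_on (\<lambda>b. (1/(r/2)^a) * (c (a,b) * (r/2)^a * y^b)) UNIV"
        by (rule abs_summable_on_cmult_right)
      have eqn: "(\<lambda>b. (1/(r/2)^a) * (c (a,b) * (r/2)^a * y^b)) = (\<lambda>b. c (a,b) * y^b)"
        using r by (auto simp: fun_eq_iff)
      show ?thesis using A unfolding eqn .
    qed
    have "F c a = F d a" using \<open>F c = F d\<close> by simp
    then show ?thesis using rs[OF C[OF _ y]] rs[OF D[OF _ y]] unfolding F_def by blast
  qed
  show ?thesis
  proof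
    fix ab :: "nat \<times> nat"
    obtain a b where ab: "ab = (a,b)" by force
    have "(\<lambda>b. c (a,b)) = (\<lambda>b. d (a,b))"
    proof (rule powser_unique[OF r, where f = "\<lambda>y. (\<Sum>\<^sub>ab. c (a,b) * y^b)"])
      fix y :: real assume y: "\<bar>y\<bar> < r"
      have R: "Infinite_Set_Sum.abs_summable_on (\<lambda>b. c (a,b) * y^b) UNIV"
          "Infinite_Set_Sum.abs_summable_on (\<lambda>b. d (a,b) * y^b) UNIV"
          "(\<Sum>\<^sub>ab. c (a,b) * y^b) = (\<Sum>\<^sub>ab. d (a,b) * y^b)"
        using row[OF y, of a] by auto
      show "(\<lambda>b. c (a,b) * y^b) sums (\<Sum>\<^sub>ab. c (a,b) * y^b)"
        using sums_infsetsum_nat[OF R(1)] by simp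
      show "(\<lambda>b. d (a,b) * y^b) sums (\<Sum>\<^sub>ab. c (a,b) * y^b)"
        using sums_infsetsum_nat[OF R(2)] R(3) by simp
    qed
    then show "c ab = d ab" unfolding ab by (simp add: fun_eq_iff)
  qed
qed

type_synonym idx = "int + int \<times> nat"

definition phi :: "int \<Rightarrow> nat \<Rightarrow> (idx \<Rightarrow> nat) \<Rightarrow> nat" where
  "phi t x \<omega> = (\<Sum>i = 1..x. \<omega> (Inr (t, i))) + \<omega> (Inl t)"

primrec Psi :: "int \<Rightarrow> nat \<Rightarrow> nat \<Rightarrow> (idx \<Rightarrow> nat) \<Rightarrow> nat" where
  "Psi t 0 x \<omega> = x"
| "Psi t (Suc n) x \<omega> = phi t (Psi (t - 1) n x \<omega>) \<omega>"

definition Lt :: "int set \<Rightarrow> idx set" where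
  "Lt T = Inl ` T \<union> Inr ` (T \<times> {1..})"

abbreviation PL :: "idx set \<Rightarrow> (idx \<Rightarrow> nat) measure" where
  "PL L \<equiv> PiM L (\<lambda>_. count_space UNIV)"

lemma phi_mono: "x \<le> y \<Longrightarrow> phi t x \<omega> \<le> phi t y \<omega>"
  unfolding phi_def by (intro add_mono sum_mono2) auto

lemma Psi_mono: "x \<le> y \<Longrightarrow> Psi t n x \<omega> \<le> Psi t n y \<omega>"
  by (induction n arbitrary: t) (auto intro: phi_mono)

lemma phi_local:
  assumes "\<And>j. j \<in> Lt {t} \<Longrightarrow> \<omega> j = \<omega>' j"
  shows "phi t x \<omega> = phi t x \<omega>'"
proof -
  have "\<omega> (Inr (t, i)) = \<omega>' (Inr (t, i))" if "i \<in> {1..x}" for i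
    using assms[of "Inr (t,i)"] that by (auto simp: Lt_def)
  moreover have "\<omega> (Inl t) = \<omega>' (Inl t)" using assms[of "Inl t"] by (auto simp: Lt_def)
  ultimately show ?thesis unfolding phi_def by (metis (no_types, lifting) sum.cong)
qed

lemma Lt_mono: "S \<subseteq> T \<Longrightarrow> Lt S \<subseteq> Lt T"
  unfolding Lt_def by auto

lemma Psi_local:
  assumes "\<And>j. j \<in> Lt {t - int n<..t} \<Longrightarrow> \<omega> j = \<omega>' j"
  shows "Psi t n x \<omega> = Psi t n x \<omega>'"
  using assms
proof (induction n arbitrary: t)
  case 0 then show ?case by simp
next
  case (Suc n)
  have "Psi (t - 1) n x \<omega> = Psi (t - 1) n x \<omega>'"
  proof (rule Suc.IH)
    fix j assume "j \<in> Lt {t - 1 - int n<..t - 1}"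
    moreover have "Lt {t - 1 - int n<..t - 1} \<subseteq> Lt {t - int (Suc n)<..t}"
      by (rule Lt_mono) auto
    ultimately show "\<omega> j = \<omega>' j" using Suc.prems by blast
  qed
  moreover have "phi t y \<omega> = phi t y \<omega>'" for y
  proof (rule phi_local)
    fix j assume "j \<in> Lt {t}"
    moreover have "Lt {t} \<subseteq> Lt {t - int (Suc n)<..t}" by (rule Lt_mono) auto
    ultimately show "\<omega> j = \<omega>' j" using Suc.prems by blast
  qed
  ultimately show ?case by simp
qed

lemma meas2:
  fixes f :: "'a \<Rightarrow> 'b::countable" and g :: "'a \<Rightarrow> 'c::countable"
  assumes f: "f \<in> measurable N (count_space UNIV)" and g: "g \<in> measurable N (count_space UNIV)"
  shows "(\<lambda>x. h (f x) (g x)) \<in> measurable N (count_space (UNIV :: 'd set))"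
proof (rule measurable_compose_countable'[where g = f and I = UNIV, OF _ f])
  fix i
  have "h i \<in> measurable (count_space UNIV) (count_space (UNIV :: 'd set))" by simp
  from measurable_compose[OF g this] show "(\<lambda>x. h i (g x)) \<in> measurable N (count_space UNIV)" .
qed (rule countableI_type)

lemma meas_sum_nat:
  fixes f :: "nat \<Rightarrow> 'a \<Rightarrow> nat"
  assumes "\<And>i. i \<in> {1..x} \<Longrightarrow> f i \<in> measurable N (count_space UNIV)"
  shows "(\<lambda>w. \<Sum>i = 1..x. f i w) \<in> measurable N (count_space UNIV)"
  using assms
proof (induction x)
  case 0 then show ?case by simp
next
  case (Suc x)
  have "(\<lambda>w. (\<Sum>i = 1..x. f i w) + f (Suc x) w) \<in> measurable N (count_space UNIV)"
    by (rule meas2[where h="(+)"]) (use Suc in auto)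
  then show ?case by simp
qed

lemma phi_meas:
  assumes "Lt {t} \<subseteq> L"
  shows "(\<lambda>\<omega>. phi t x \<omega>) \<in> measurable (PL L) (count_space UNIV)"
proof -
  have comp: "(\<lambda>\<omega>. \<omega> j) \<in> measurable (PL L) (count_space UNIV)" if "j \<in> L" for j
    using measurable_component_singleton[OF that, of "\<lambda>_. count_space UNIV"] by simp
  have c1: "(\<lambda>\<omega>. \<Sum>i = 1..x. \<omega> (Inr (t, i))) \<in> measurable (PL L) (count_space UNIV)"
    by (rule meas_sum_nat, rule comp) (use assms in \<open>force simp: Lt_def\<close>)
  have c2: "(\<lambda>\<omega>. \<omega> (Inl t)) \<in> measurable (PL L) (count_space UNIV)"
    by (rule comp) (use assms in \<open>force simp: Lt_def\<close>)
  have "(\<lambda>\<omega>. (\<Sum>i = 1..x. \<omega> (Inr (t, i))) + \<omega> (Inl t)) \<in> measurable (PL L) (count_space UNIV)"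
    by (rule meas2[OF c1 c2, where h="(+)"])
  then show ?thesis unfolding phi_def .
qed

lemma Psi_meas:
  assumes "Lt {t - int n<..t} \<subseteq> L"
  shows "(\<lambda>\<omega>. Psi t n x \<omega>) \<in> measurable (PL L) (count_space UNIV)"
  using assms
proof (induction n arbitrary: t)
  case 0 then show ?case by simp
next
  case (Suc n)
  have "Lt {t - 1 - int n<..t - 1} \<subseteq> Lt {t - int (Suc n)<..t}" by (rule Lt_mono) auto
  then have IH: "(\<lambda>\<omega>. Psi (t - 1) n x \<omega>) \<in> measurable (PL L) (count_space UNIV)"
    using Suc by blast
  have "Lt {t} \<subseteq> Lt {t - int (Suc n)<..t}" by (rule Lt_mono) auto
  then have P: "(\<lambda>\<omega>. phi t y \<omega>) \<in> measurable (PL L) (count_space UNIV)" for y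
    using Suc.prems phi_meas by blast
  have "(\<lambda>\<omega>. phi t (Psi (t - 1) n x \<omega>) \<omega>) \<in> measurable (PL L) (count_space UNIV)"
    by (rule measurable_compose_countable'[OF P IH]) simp
  then show ?case by simp
qed

locale ginar = prob_space M for M :: "'w measure" +
  fixes mu alpha :: real and eps :: "int \<Rightarrow> 'w \<Rightarrow> nat" and G :: "int \<Rightarrow> nat \<Rightarrow> 'w \<Rightarrow> nat"
    and X :: "int \<Rightarrow> 'w \<Rightarrow> nat"
  assumes mu_pos: "mu > 0" and alpha_pos: "0 < alpha" and alpha_lt1: "alpha < 1"
  and meas_X[measurable]: "\<And>t. X t \<in> measurable M (count_space UNIV)"
  and meas_eps[measurable]: "\<And>t. eps t \<in> measurable M (count_space UNIV)"
  and meas_G[measurable]: "\<And>t i. G t i \<in> measurable M (count_space UNIV)"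
  and eps_dist: "\<And>t k. measure M {w \<in> space M. eps t w = k} = geo_p ((1 - alpha) * mu) k"
  and G_dist: "\<And>t i k. i \<ge> 1 \<Longrightarrow> measure M {w \<in> space M. G t i w = k} =
        zmg_p (1 - alpha / ((1 - alpha) * mu)) ((1 - alpha) * mu) k"
  and indep: "indep_vars (\<lambda>_. count_space UNIV) (\<lambda>j. case j of Inl t \<Rightarrow> eps t | Inr (t, i) \<Rightarrow> G t i)
        (range Inl \<union> Inr ` (UNIV \<times> {1..}))"
  and recur: "\<And>t w. w \<in> space M \<Longrightarrow> X t w = (\<Sum>i = 1..X (t - 1) w. G t i w) + eps t w"
  and X_dist: "\<And>t k. measure M {w \<in> space M. X t w = k} = geo_p mu k"
begin

definition me where "me = (1 - alpha) * mu"
definition pp where "pp = 1 - alpha / me"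

lemma me_pos: "me > 0" using mu_pos alpha_lt1 by (simp add: me_def)

lemma pp_me: "(1 - pp) * me = alpha" using me_pos by (simp add: pp_def)

definition inn :: "'w \<Rightarrow> idx \<Rightarrow> nat" where
  "inn w = (\<lambda>j. case j of Inl t \<Rightarrow> eps t w | Inr (t, i) \<Rightarrow> G t i w)"

definition II :: "idx set" where "II = range Inl \<union> Inr ` (UNIV \<times> {1..})"

lemma Lt_II: "Lt T \<subseteq> II" unfolding Lt_def II_def by auto

lemma indep': "indep_vars (\<lambda>_. count_space UNIV) (\<lambda>j w. inn w j) II"
proof -
  have "(\<lambda>j. case j of Inl t \<Rightarrow> eps t | Inr (t, i) \<Rightarrow> G t i) = (\<lambda>j w. inn w j)"
    by (auto simp: fun_eq_iff inn_def split: sum.split prod.split)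
  then show ?thesis using indep unfolding II_def by simp
qed

lemma inn_meas[measurable]: "(\<lambda>w. inn w j) \<in> measurable M (count_space UNIV)"
  unfolding inn_def by (cases j) auto

lemma restrict_inn_meas: "(\<lambda>w. restrict (inn w) L) \<in> measurable M (PL L)"
  by (rule measurable_restrict) simp

lemma Psi_inn_meas[measurable]: "(\<lambda>w. Psi t n x (inn w)) \<in> measurable M (count_space UNIV)"
proof -
  let ?L = "Lt {t - int n<..t}"
  have "(\<lambda>w. Psi t n x (restrict (inn w) ?L)) \<in> measurable M (count_space UNIV)"
    using measurable_compose[OF restrict_inn_meas Psi_meas[OF order_refl]] by simp
  moreover have "Psi t n x (restrict (inn w) ?L) = Psi t n x (inn w)" for w
    by (rule Psi_local) simp
  ultimately show ?thesis by simp
qed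

lemma phi_inn_meas[measurable]: "(\<lambda>w. phi t x (inn w)) \<in> measurable M (count_space UNIV)"
  using Psi_inn_meas[of t 1 x] by simp

lemma X_phi: "w \<in> space M \<Longrightarrow> X t w = phi t (X (t - 1) w) (inn w)"
  using recur[of w t] by (simp add: phi_def inn_def)

lemma X_Psi: "w \<in> space M \<Longrightarrow> X t w = Psi t n (X (t - int n) w) (inn w)"
proof (induction n arbitrary: t)
  case 0 then show ?case by simp
next
  case (Suc n)
  have "X (t - 1) w = Psi (t - 1) n (X (t - 1 - int n) w) (inn w)" using Suc by blast
  moreover have "t - 1 - int n = t - int (Suc n)" by simp
  ultimately show ?case using X_phi[OF Suc.prems, of t] by simp
qed

lemma indep_groups:
  assumes L: "L1 \<subseteq> II" "L2 \<subseteq> II" "L1 \<inter> L2 = {}"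
    and A: "A1 \<in> sets (PL L1)" "A2 \<in> sets (PL L2)"
  shows "prob {w \<in> space M. restrict (inn w) L1 \<in> A1 \<and> restrict (inn w) L2 \<in> A2} =
         prob {w \<in> space M. restrict (inn w) L1 \<in> A1} * prob {w \<in> space M. restrict (inn w) L2 \<in> A2}"
proof -
  have "indep_var (PL L1) (\<lambda>w. restrict (\<lambda>j. inn w j) L1) (PL L2) (\<lambda>w. restrict (\<lambda>j. inn w j) L2)"
    by (rule indep_var_restrict[OF indep' L(3) L(1) L(2)])
  from indep_varD[OF this A] show ?thesis
    by (simp add: vimage_def Int_def conj_commute conj_left_commute)
qed

lemma indep_preds:
  assumes L: "L1 \<subseteq> II" "L2 \<subseteq> II" "L1 \<inter> L2 = {}"
    and S1: "{\<omega> \<in> space (PL L1). P1 \<omega>} \<in> sets (PL L1)"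
    and S2: "{\<omega> \<in> space (PL L2). P2 \<omega>} \<in> sets (PL L2)"
    and loc1: "\<And>\<omega>. P1 (restrict \<omega> L1) = P1 \<omega>"
    and loc2: "\<And>\<omega>. P2 (restrict \<omega> L2) = P2 \<omega>"
  shows "prob {w \<in> space M. P1 (inn w) \<and> P2 (inn w)} =
         prob {w \<in> space M. P1 (inn w)} * prob {w \<in> space M. P2 (inn w)}"
proof -
  have sp: "restrict (inn w) L \<in> space (PL L)" for w L by (simp add: space_PiM)
  have e1: "(restrict (inn w) L1 \<in> {\<omega> \<in> space (PL L1). P1 \<omega>}) = P1 (inn w)" for w
    using sp loc1 by auto
  have e2: "(restrict (inn w) L2 \<in> {\<omega> \<in> space (PL L2). P2 \<omega>}) = P2 (inn w)" for w
    using sp loc2 by auto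
  show ?thesis using indep_groups[OF L S1 S2] unfolding e1 e2 .
qed

lemma pred_PL:
  assumes "f \<in> measurable (PL L) (count_space UNIV)"
  shows "{\<omega> \<in> space (PL L). f \<omega> = c} \<in> sets (PL L)"
  using measurable_sets[OF assms, of "{c}"] by (simp add: vimage_def Int_def conj_commute)

end

lemma pred_meas2:
  fixes f :: "'a \<Rightarrow> nat" and g :: "'a \<Rightarrow> nat"
  assumes f: "f \<in> measurable N (count_space UNIV)" and g: "g \<in> measurable N (count_space UNIV)"
  shows "{\<omega> \<in> space N. Q (f \<omega>) (g \<omega>)} \<in> sets N"
proof -
  have "(\<lambda>\<omega>. Q (f \<omega>) (g \<omega>)) \<in> measurable N (count_space (UNIV :: bool set))"
    by (rule meas2[OF f g])
  from measurable_sets[OF this, of "{True}"] show ?thesis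
    by (simp add: vimage_def Int_def conj_commute)
qed

lemma phi_diff:
  assumes "Y \<le> U"
  shows "(of_nat (phi s U \<omega> - phi s Y \<omega>) :: ennreal) =
         (\<Sum>i. of_nat (if Y < i \<and> i \<le> U then \<omega> (Inr (s, i)) else 0))"
proof -
  have un: "{1..U} = {1..Y} \<union> {Y<..U}" using assms by auto
  have "phi s U \<omega> = phi s Y \<omega> + (\<Sum>i\<in>{Y<..U}. \<omega> (Inr (s, i)))"
    unfolding phi_def un by (subst sum.union_disjoint) auto
  then have "phi s U \<omega> - phi s Y \<omega> = (\<Sum>i\<in>{Y<..U}. \<omega> (Inr (s, i)))" by simp
  moreover have "(\<Sum>i. (of_nat (if Y < i \<and> i \<le> U then \<omega> (Inr (s, i)) else 0) :: ennreal)) =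
      (\<Sum>i\<in>{Y<..U}. of_nat (if Y < i \<and> i \<le> U then \<omega> (Inr (s, i)) else 0))"
    by (rule suminf_finite) auto
  moreover have "(\<Sum>i\<in>{Y<..U}. (of_nat (if Y < i \<and> i \<le> U then \<omega> (Inr (s, i)) else 0) :: ennreal)) =
      (\<Sum>i\<in>{Y<..U}. of_nat (\<omega> (Inr (s, i))))"
    by (rule sum.cong) auto
  ultimately show ?thesis by simp
qed

lemma count_diff:
  assumes "Y \<le> (U::nat)"
  shows "(of_nat (U - Y) :: ennreal) = (\<Sum>i. of_bool (Y < i \<and> i \<le> U))"
proof -
  have "(\<Sum>i. of_bool (Y < i \<and> i \<le> U) :: ennreal) = (\<Sum>i\<in>{Y<..U}. of_bool (Y < i \<and> i \<le> U))"
    by (rule suminf_finite) auto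
  also have "\<dots> = (\<Sum>i\<in>{Y<..U}. 1)" by (rule sum.cong) auto
  also have "\<dots> = of_nat (U - Y)" by simp
  finally show ?thesis by simp
qed

lemma Psi_restrict: "Lt {t - int n<..t} \<subseteq> L \<Longrightarrow> Psi t n x (restrict \<omega> L) = Psi t n x \<omega>"
  by (rule Psi_local) auto

context ginar
begin

lemma inn_Inr[simp]: "inn w (Inr (t, i)) = G t i w" by (simp add: inn_def)
lemma inn_Inl[simp]: "inn w (Inl t) = eps t w" by (simp add: inn_def)

lemma nn_integral_nat_rv:
  fixes V :: "'w \<Rightarrow> nat"
  assumes V[measurable]: "V \<in> measurable M (count_space UNIV)"
  shows "(\<integral>\<^sup>+ w. of_nat (V w) \<partial>M) = (\<Sum>k. of_nat k * ennreal (prob {w \<in> space M. V w = k}))"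
proof -
  have "(\<integral>\<^sup>+ w. of_nat (V w) \<partial>M) = (\<integral>\<^sup>+ w. (\<Sum>k. of_nat k * indicator {w \<in> space M. V w = k} w) \<partial>M)"
  proof (rule nn_integral_cong)
    fix w assume w: "w \<in> space M"
    have "(\<Sum>k. (of_nat k * indicator {w \<in> space M. V w = k} w :: ennreal)) =
          (\<Sum>k\<in>{V w}. of_nat k * indicator {w \<in> space M. V w = k} w)"
      by (rule suminf_finite) (auto simp: indicator_def)
    then show "(of_nat (V w) :: ennreal) = (\<Sum>k. of_nat k * indicator {w \<in> space M. V w = k} w)"
      using w by (simp add: indicator_def)
  qed
  also have "\<dots> = (\<Sum>k. \<integral>\<^sup>+ w. of_nat k * indicator {w \<in> space M. V w = k} w \<partial>M)"
    by (rule nn_integral_suminf) measurable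
  also have "\<dots> = (\<Sum>k. of_nat k * emeasure M {w \<in> space M. V w = k})"
    by (subst nn_integral_cmult_indicator) (auto)
  finally show ?thesis by (simp add: emeasure_eq_measure)
qed

lemma zmg_nonneg: "zmg_p pp me k \<ge> 0"
  using G_dist[of 1 _ k] measure_nonneg unfolding pp_def me_def by (metis order_refl)

lemma G_dist': "i \<ge> 1 \<Longrightarrow> prob {w \<in> space M. G t i w = k} = zmg_p pp me k"
  using G_dist unfolding pp_def me_def by simp

lemma term_lemma:
  assumes i: "i \<ge> 1"
  shows "(\<integral>\<^sup>+ w. of_nat (if Psi (s - 1) j 0 (inn w) < i \<and> i \<le> Psi (s - 1) j K (inn w) then G s i w else 0) \<partial>M)
     = ennreal (prob {w \<in> space M. Psi (s - 1) j 0 (inn w) < i \<and> i \<le> Psi (s - 1) j K (inn w)}) * ennreal alpha"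
    (is "_ = ennreal (prob ?A) * _")
proof -
  define P1 where "P1 \<omega> = (Psi (s - 1) j 0 \<omega> < i \<and> i \<le> Psi (s - 1) j K \<omega>)" for \<omega>
  let ?L1 = "Lt {..s - 1}" and ?L2 = "{Inr (s, i)} :: idx set"
  have sub: "Lt {s - 1 - int j<..s - 1} \<subseteq> ?L1" by (rule Lt_mono) auto
  have pk: "prob {w \<in> space M. (if P1 (inn w) then G s i w else 0) = k} = prob ?A * zmg_p pp me k"
    if k: "k \<ge> 1" for k
  proof -
    have "{w \<in> space M. (if P1 (inn w) then G s i w else 0) = k} = {w \<in> space M. P1 (inn w) \<and> inn w (Inr (s, i)) = k}"
      using k by (auto simp: inn_def)
    also have "prob \<dots> = prob {w \<in> space M. P1 (inn w)} * prob {w \<in> space M. inn w (Inr (s, i)) = k}"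
    proof (rule indep_preds)
      show "?L1 \<subseteq> II" "?L2 \<subseteq> II" using Lt_II i by (auto simp: II_def)
      show "?L1 \<inter> ?L2 = {}" by (auto simp: Lt_def)
      show "{\<omega> \<in> space (PL ?L1). P1 \<omega>} \<in> sets (PL ?L1)"
        unfolding P1_def by (intro pred_meas2 Psi_meas sub)
      show "{\<omega> \<in> space (PL ?L2). \<omega> (Inr (s, i)) = k} \<in> sets (PL ?L2)"
        by (rule pred_PL) (rule measurable_component_singleton, simp)
      show "P1 (restrict \<omega> ?L1) = P1 \<omega>" for \<omega>
        unfolding P1_def using sub by (simp add: Psi_restrict)
      show "(restrict \<omega> ?L2 (Inr (s, i)) = k) = (\<omega> (Inr (s, i)) = k)" for \<omega> by simp
    qed
    also have "{w \<in> space M. inn w (Inr (s, i)) = k} = {w \<in> space M. G s i w = k}" by (simp add: inn_def)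
    finally show ?thesis using G_dist'[OF i] unfolding P1_def by simp
  qed
  have "(\<integral>\<^sup>+ w. of_nat (if P1 (inn w) then G s i w else 0) \<partial>M) =
        (\<Sum>k. of_nat k * ennreal (prob {w \<in> space M. (if P1 (inn w) then G s i w else 0) = k}))"
    by (rule nn_integral_nat_rv) (unfold P1_def, measurable)
  also have "\<dots> = (\<Sum>k. ennreal (prob ?A * (zmg_p pp me k * real k)))"
  proof (rule suminf_cong)
    fix k :: nat
    show "of_nat k * ennreal (prob {w \<in> space M. (if P1 (inn w) then G s i w else 0) = k}) = ennreal (prob ?A * (zmg_p pp me k * real k))"
    proof (cases "k = 0")
      case True then show ?thesis by simp
    next
      case False
      then have "k \<ge> 1" by simp
      then show ?thesis using pk[of k] zmg_nonneg[of k]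
        by (simp add: ennreal_of_nat_eq_real_of_nat ennreal_mult[symmetric] mult_ac)
    qed
  qed
  also have "\<dots> = ennreal (prob ?A * ((1 - pp) * me))"
    by (rule suminf_ennreal_eq) (auto intro!: sums_mult zmg_mean_sums me_pos[THEN less_imp_le] zmg_nonneg mult_nonneg_nonneg)
  also have "\<dots> = ennreal (prob ?A) * ennreal alpha"
    using pp_me alpha_pos by (simp add: ennreal_mult)
  finally show ?thesis unfolding P1_def .
qed

lemma ED:
  "(\<integral>\<^sup>+ w. of_nat (Psi (t0 + int j) j K (inn w) - Psi (t0 + int j) j 0 (inn w)) \<partial>M) = of_nat K * ennreal (alpha ^ j)"
proof (induction j)
  case 0
  then show ?case by (simp add: emeasure_space_1)
next
  case (Suc j)
  define s where "s = t0 + int (Suc j)"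
  have s1: "s - 1 = t0 + int j" unfolding s_def by simp
  define Y where "Y w = Psi (s - 1) j 0 (inn w)" for w
  define U where "U w = Psi (s - 1) j K (inn w)" for w
  have YU: "Y w \<le> U w" for w unfolding Y_def U_def by (rule Psi_mono) simp
  have "(\<integral>\<^sup>+ w. of_nat (Psi s (Suc j) K (inn w) - Psi s (Suc j) 0 (inn w)) \<partial>M)
      = (\<integral>\<^sup>+ w. (\<Sum>i. of_nat (if Y w < i \<and> i \<le> U w then G s i w else 0)) \<partial>M)"
  proof (rule nn_integral_cong)
    fix w
    have "(of_nat (phi s (U w) (inn w) - phi s (Y w) (inn w)) :: ennreal) =
       (\<Sum>i. of_nat (if Y w < i \<and> i \<le> U w then inn w (Inr (s, i)) else 0))"
      by (rule phi_diff[OF YU])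
    also have "(\<lambda>i. (of_nat (if Y w < i \<and> i \<le> U w then inn w (Inr (s, i)) else 0) :: ennreal)) =
       (\<lambda>i. of_nat (if Y w < i \<and> i \<le> U w then G s i w else 0))" by (simp add: fun_eq_iff)
    finally show "(of_nat (Psi s (Suc j) K (inn w) - Psi s (Suc j) 0 (inn w)) :: ennreal) =
       (\<Sum>i. of_nat (if Y w < i \<and> i \<le> U w then G s i w else 0))"
      unfolding Y_def U_def by simp
  qed
  also have "\<dots> = (\<Sum>i. \<integral>\<^sup>+ w. of_nat (if Y w < i \<and> i \<le> U w then G s i w else 0) \<partial>M)"
    by (rule nn_integral_suminf) (unfold Y_def U_def, measurable)
  also have "\<dots> = (\<Sum>i. ennreal (prob {w \<in> space M. Y w < i \<and> i \<le> U w}) * ennreal alpha)"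
  proof (rule suminf_cong)
    fix i :: nat
    show "(\<integral>\<^sup>+ w. of_nat (if Y w < i \<and> i \<le> U w then G s i w else 0) \<partial>M) =
       ennreal (prob {w \<in> space M. Y w < i \<and> i \<le> U w}) * ennreal alpha"
    proof (cases "i = 0")
      case True then show ?thesis by simp
    next
      case False
      then show ?thesis using term_lemma[of i s j K] unfolding Y_def U_def by simp
    qed
  qed
  also have "\<dots> = (\<Sum>i. emeasure M {w \<in> space M. Y w < i \<and> i \<le> U w}) * ennreal alpha"
    by (simp add: emeasure_eq_measure)
  also have "(\<Sum>i. emeasure M {w \<in> space M. Y w < i \<and> i \<le> U w}) =
      (\<Sum>i. \<integral>\<^sup>+ w. indicator {w \<in> space M. Y w < i \<and> i \<le> U w} w \<partial>M)"
    by (subst nn_integral_indicator) (unfold Y_def U_def, measurable)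
  also have "\<dots> = (\<integral>\<^sup>+ w. (\<Sum>i. indicator {w \<in> space M. Y w < i \<and> i \<le> U w} w) \<partial>M)"
    by (rule nn_integral_suminf[symmetric]) (unfold Y_def U_def, measurable)
  also have "\<dots> = (\<integral>\<^sup>+ w. of_nat (U w - Y w) \<partial>M)"
  proof (rule nn_integral_cong)
    fix w assume w: "w \<in> space M"
    show "(\<Sum>i. indicator {w \<in> space M. Y w < i \<and> i \<le> U w} w) = (of_nat (U w - Y w) :: ennreal)"
      using count_diff[OF YU[of w]] w by (simp add: indicator_def)
  qed
  also have "\<dots> = of_nat K * ennreal (alpha ^ j)"
    using Suc.IH unfolding U_def Y_def s1 .
  finally show ?case unfolding s_def
    using alpha_pos by (simp add: ennreal_mult mult_ac)
qed

end

lemma sets_all_le: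
  assumes "\<And>h. h \<le> (k::nat) \<Longrightarrow> {x \<in> space N. P h x} \<in> sets N"
  shows "{x \<in> space N. \<forall>h\<le>k. P h x} \<in> sets N"
proof -
  have eq: "{x \<in> space N. \<forall>h\<le>k. P h x} = (\<Inter>h\<in>{..k}. {x \<in> space N. P h x})" by auto
  have "(\<Inter>h\<in>{..k}. {x \<in> space N. P h x}) \<in> sets N"
    by (rule sets.finite_INT) (auto intro: assms)
  then show ?thesis unfolding eq .
qed

lemma sets_neq:
  fixes f g :: "'a \<Rightarrow> nat"
  assumes "f \<in> measurable N (count_space UNIV)" "g \<in> measurable N (count_space UNIV)"
  shows "{w \<in> space N. f w \<noteq> g w} \<in> sets N"
  using pred_meas2[OF assms, where Q="(\<noteq>)"] by simp

context ginar
begin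

lemma diff_bound: "prob {w \<in> space M. Psi t n K (inn w) \<noteq> Psi t n 0 (inn w)} \<le> real K * alpha ^ n"
proof -
  let ?S = "{w \<in> space M. Psi t n K (inn w) \<noteq> Psi t n 0 (inn w)}"
  have S: "?S \<in> sets M" by (rule sets_neq) measurable
  have "emeasure M ?S = (\<integral>\<^sup>+ w. indicator ?S w \<partial>M)"
    using S by simp
  also have "\<dots> \<le> (\<integral>\<^sup>+ w. of_nat (Psi t n K (inn w) - Psi t n 0 (inn w)) \<partial>M)"
  proof (rule nn_integral_mono)
    fix w
    have "Psi t n 0 (inn w) \<le> Psi t n K (inn w)" by (rule Psi_mono) simp
    then show "indicator ?S w \<le> (of_nat (Psi t n K (inn w) - Psi t n 0 (inn w)) :: ennreal)"
      by (auto simp: indicator_def)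
  qed
  also have "\<dots> = of_nat K * ennreal (alpha ^ n)"
    using ED[of "t - int n" n K] by simp
  also have "\<dots> = ennreal (real K * alpha ^ n)"
    using alpha_pos by (simp add: ennreal_of_nat_eq_real_of_nat ennreal_mult)
  finally show ?thesis
    using alpha_pos by (simp add: emeasure_eq_measure ennreal_le_iff)
qed

definition tl :: "nat \<Rightarrow> real" where "tl K = 1 - (\<Sum>k\<le>K. geo_p mu k)"

lemma prob_le: "prob {w \<in> space M. X s w \<le> K} = (\<Sum>k\<le>K. geo_p mu k)"
proof (induction K)
  case 0
  then show ?case using X_dist[of s 0] by simp
next
  case (Suc K)
  have "{w \<in> space M. X s w \<le> Suc K} = {w \<in> space M. X s w \<le> K} \<union> {w \<in> space M. X s w = Suc K}"
    by auto
  moreover have s1: "{w \<in> space M. X s w \<le> K} \<in> events" by measurable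
  moreover have s2: "{w \<in> space M. X s w = Suc K} \<in> events" by measurable
  moreover have d: "{w \<in> space M. X s w \<le> K} \<inter> {w \<in> space M. X s w = Suc K} = {}" by auto
  ultimately have "prob {w \<in> space M. X s w \<le> Suc K} = prob {w \<in> space M. X s w \<le> K} + prob {w \<in> space M. X s w = Suc K}"
    using finite_measure_Union[OF s1 s2 d] by simp
  then show ?case using Suc X_dist[of s "Suc K"] by simp
qed

lemma prob_gt: "prob {w \<in> space M. X s w > K} = tl K"
proof -
  have "{w \<in> space M. X s w > K} = space M - {w \<in> space M. X s w \<le> K}" by auto
  then show ?thesis using prob_compl[of "{w \<in> space M. X s w \<le> K}"] prob_le[of s K]
    by (simp add: tl_def)
qed

lemma tl_lim: "tl \<longlonglongrightarrow> 0"
proof -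
  let ?A = "\<lambda>K. {w \<in> space M. X 0 w > K}"
  have "(\<lambda>K. prob (?A K)) \<longlonglongrightarrow> prob (\<Inter>K. ?A K)"
    by (rule finite_Lim_measure_decseq) (auto simp: decseq_def)
  moreover have "(\<Inter>K. ?A K) = {}"
  proof -
    have False if "w \<in> (\<Inter>K. ?A K)" for w
    proof -
      from that have "w \<in> ?A (X 0 w)" by blast
      then show False by simp
    qed
    then show ?thesis by blast
  qed
  moreover have "(\<lambda>K. prob (?A K)) = tl" using prob_gt[where s=0] by (simp add: fun_eq_iff)
  ultimately show ?thesis by simp
qed

lemma approx_bound: "prob {w \<in> space M. X t w \<noteq> Psi t n 0 (inn w)} \<le> tl K + real K * alpha ^ n"
proof -
  let ?A = "{w \<in> space M. X (t - int n) w > K}"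
  let ?B = "{w \<in> space M. Psi t n K (inn w) \<noteq> Psi t n 0 (inn w)}"
  have sub: "{w \<in> space M. X t w \<noteq> Psi t n 0 (inn w)} \<subseteq> ?A \<union> ?B"
  proof (rule subsetI)
    fix w assume "w \<in> {w \<in> space M. X t w \<noteq> Psi t n 0 (inn w)}"
    then have w: "w \<in> space M" and ne: "X t w \<noteq> Psi t n 0 (inn w)" by auto
    show "w \<in> ?A \<union> ?B"
    proof (cases "X (t - int n) w \<le> K")
      case le: True
      have eq: "X t w = Psi t n (X (t - int n) w) (inn w)" by (rule X_Psi[OF w])
      have "Psi t n 0 (inn w) \<le> X t w" unfolding eq by (rule Psi_mono) simp
      moreover have "X t w \<le> Psi t n K (inn w)" unfolding eq by (rule Psi_mono[OF le])
      ultimately show ?thesis using ne w by auto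
    next
      case False
      then show ?thesis using w by auto
    qed
  qed
  have As: "?A \<in> events" by measurable
  have Bs: "?B \<in> events" by (rule sets_neq) measurable
  have "prob {w \<in> space M. X t w \<noteq> Psi t n 0 (inn w)} \<le> prob (?A \<union> ?B)"
    by (rule finite_measure_mono[OF sub]) (use As Bs in auto)
  also have "\<dots> \<le> prob ?A + prob ?B"
    by (rule measure_Un_le[OF As Bs])
  also have "\<dots> \<le> tl K + real K * alpha ^ n"
    using prob_gt diff_bound by (intro add_mono) auto
  finally show ?thesis .
qed

lemma approx_lim: "(\<lambda>n. prob {w \<in> space M. X t w \<noteq> Psi t n 0 (inn w)}) \<longlonglongrightarrow> 0"
proof (rule order_tendstoI)
  fix a :: real assume "a < 0"
  then show "\<forall>\<^sub>F n in sequentially. a < prob {w \<in> space M. X t w \<noteq> Psi t n 0 (inn w)}"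
    by (intro always_eventually allI) (rule less_le_trans[OF \<open>a < 0\<close> measure_nonneg])
next
  fix e :: real assume e: "0 < e"
  then have "\<forall>\<^sub>F K in sequentially. tl K < e / 2"
    using order_tendstoD(2)[OF tl_lim, of "e/2"] by simp
  then obtain K where K: "tl K < e / 2" by (auto simp: eventually_sequentially)
  have "(\<lambda>n. real K * alpha ^ n) \<longlonglongrightarrow> real K * 0"
    by (intro tendsto_mult tendsto_const LIMSEQ_power_zero) (use alpha_pos alpha_lt1 in auto)
  then have "\<forall>\<^sub>F n in sequentially. real K * alpha ^ n < e / 2"
    using order_tendstoD(2)[of "\<lambda>n. real K * alpha ^ n" "real K * 0" sequentially "e/2"] e by simp
  then show "\<forall>\<^sub>F n in sequentially. prob {w \<in> space M. X t w \<noteq> Psi t n 0 (inn w)} < e"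
  proof (rule eventually_mono)
    fix n assume "real K * alpha ^ n < e / 2"
    then show "prob {w \<in> space M. X t w \<noteq> Psi t n 0 (inn w)} < e"
      using approx_bound[of t n K] K by linarith
  qed
qed

lemma prob_conv:
  assumes A: "\<And>n. A n \<in> events" "A' \<in> events" and B: "\<And>n. B n \<in> events"
    and sub: "\<And>n. (A n - A') \<union> (A' - A n) \<subseteq> B n"
    and lim: "(\<lambda>n. prob (B n)) \<longlonglongrightarrow> 0"
  shows "(\<lambda>n. prob (A n)) \<longlonglongrightarrow> prob A'"
proof -
  have "norm (prob (A n) - prob A') \<le> prob (B n)" for n
  proof -
    have "prob (A n) \<le> prob (A' \<union> B n)"
      by (rule finite_measure_mono) (use sub[of n] A B in auto)
    also have "\<dots> \<le> prob A' + prob (B n)" by (rule measure_Un_le) (use A B in auto)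
    finally have 1: "prob (A n) \<le> prob A' + prob (B n)" .
    have "prob A' \<le> prob (A n \<union> B n)"
      by (rule finite_measure_mono) (use sub[of n] A B in auto)
    also have "\<dots> \<le> prob (A n) + prob (B n)" by (rule measure_Un_le) (use A B in auto)
    finally have 2: "prob A' \<le> prob (A n) + prob (B n)" .
    from 1 2 show ?thesis by simp
  qed
  then have "(\<lambda>n. prob (A n) - prob A') \<longlonglongrightarrow> 0"
    by (intro Lim_null_comparison[OF _ lim] always_eventually) auto
  then show ?thesis by (simp add: LIM_zero_iff)
qed

lemma markov:
  "prob {w \<in> space M. (\<forall>h\<le>k. X (u - int h) w = y h) \<and> phi (u + 1) c (inn w) = b} =
   prob {w \<in> space M. \<forall>h\<le>k. X (u - int h) w = y h} * prob {w \<in> space M. phi (u + 1) c (inn w) = b}"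
proof -
  define SX where "SX = {w \<in> space M. \<forall>h\<le>k. X (u - int h) w = y h}"
  define EY where "EY n = {w \<in> space M. \<forall>h\<le>k. Psi (u - int h) n 0 (inn w) = y h}" for n
  define Z where "Z = {w \<in> space M. phi (u + 1) c (inn w) = b}"
  have SXs: "SX \<in> events" unfolding SX_def by (rule sets_all_le) measurable
  have EYs: "EY n \<in> events" for n unfolding EY_def by (rule sets_all_le) measurable
  have Zs: "Z \<in> events" unfolding Z_def by measurable
  let ?L1 = "Lt {..u}" and ?L2 = "Lt {u + 1}"
  have sub1: "Lt {u - int h - int n<..u - int h} \<subseteq> ?L1" for h n by (rule Lt_mono) auto
  have indep_n: "prob (EY n \<inter> Z) = prob (EY n) * prob Z" for n
  proof -
    have "prob {w \<in> space M. (\<forall>h\<le>k. Psi (u - int h) n 0 (inn w) = y h) \<and> phi (u + 1) c (inn w) = b} =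
      prob {w \<in> space M. \<forall>h\<le>k. Psi (u - int h) n 0 (inn w) = y h} * prob {w \<in> space M. phi (u + 1) c (inn w) = b}"
    proof (rule indep_preds)
      show "?L1 \<subseteq> II" "?L2 \<subseteq> II" by (rule Lt_II)+
      show "?L1 \<inter> ?L2 = {}" by (auto simp: Lt_def)
      show "{\<omega> \<in> space (PL ?L1). \<forall>h\<le>k. Psi (u - int h) n 0 \<omega> = y h} \<in> sets (PL ?L1)"
        by (rule sets_all_le, rule pred_PL, rule Psi_meas, rule sub1)
      show "{\<omega> \<in> space (PL ?L2). phi (u + 1) c \<omega> = b} \<in> sets (PL ?L2)"
        by (rule pred_PL, rule phi_meas) simp
      show "(\<forall>h\<le>k. Psi (u - int h) n 0 (restrict \<omega> ?L1) = y h) = (\<forall>h\<le>k. Psi (u - int h) n 0 \<omega> = y h)" for \<omega>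
        using sub1 by (simp add: Psi_restrict)
      show "(phi (u + 1) c (restrict \<omega> ?L2) = b) = (phi (u + 1) c \<omega> = b)" for \<omega>
        by (subst phi_local[of "u + 1" \<omega> "restrict \<omega> ?L2"]) auto
    qed
    moreover have "{w \<in> space M. (\<forall>h\<le>k. Psi (u - int h) n 0 (inn w) = y h) \<and> phi (u + 1) c (inn w) = b} = EY n \<inter> Z"
      unfolding EY_def Z_def by auto
    ultimately show ?thesis unfolding EY_def Z_def by simp
  qed
  define D where "D n = (\<Union>h\<in>{..k}. {w \<in> space M. X (u - int h) w \<noteq> Psi (u - int h) n 0 (inn w)})" for n
  have Sh: "{w \<in> space M. X (u - int h) w \<noteq> Psi (u - int h) n 0 (inn w)} \<in> events" for h n
    by (rule sets_neq) measurable
  have Ds: "D n \<in> events" for n unfolding D_def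
    by (intro sets.finite_UN finite_atMost ballI Sh)
  have Dlim: "(\<lambda>n. prob (D n)) \<longlonglongrightarrow> 0"
  proof (rule Lim_null_comparison)
    have "prob (D n) \<le> (\<Sum>h\<in>{..k}. prob {w \<in> space M. X (u - int h) w \<noteq> Psi (u - int h) n 0 (inn w)})" for n
      unfolding D_def by (rule finite_measure_subadditive_finite) (use Sh in blast)+
    then show "\<forall>\<^sub>F n in sequentially. norm (prob (D n)) \<le> (\<Sum>h\<in>{..k}. prob {w \<in> space M. X (u - int h) w \<noteq> Psi (u - int h) n 0 (inn w)})"
      by (intro always_eventually allI) (simp only: real_norm_def abs_of_nonneg[OF measure_nonneg])
    show "(\<lambda>n. \<Sum>h\<in>{..k}. prob {w \<in> space M. X (u - int h) w \<noteq> Psi (u - int h) n 0 (inn w)}) \<longlonglongrightarrow> 0"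
      by (rule tendsto_null_sum) (rule approx_lim)
  qed
  have symd: "(EY n \<inter> A - SX \<inter> A) \<union> (SX \<inter> A - EY n \<inter> A) \<subseteq> D n" for n A
  proof
    fix w assume w: "w \<in> (EY n \<inter> A - SX \<inter> A) \<union> (SX \<inter> A - EY n \<inter> A)"
    then have ws: "w \<in> space M" unfolding EY_def SX_def by auto
    from w have "\<exists>h\<le>k. X (u - int h) w \<noteq> Psi (u - int h) n 0 (inn w)"
      unfolding EY_def SX_def by auto
    then show "w \<in> D n" unfolding D_def using ws by blast
  qed
  have IZ: "EY n \<inter> Z \<in> events" for n using EYs Zs by (rule sets.Int)
  have c1: "(\<lambda>n. prob (EY n \<inter> Z)) \<longlonglongrightarrow> prob (SX \<inter> Z)"
    by (rule prob_conv[OF IZ _ Ds symd Dlim]) (rule sets.Int[OF SXs Zs])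
  have IS: "EY n \<inter> space M \<in> events" for n using EYs by (rule sets.Int) simp
  have c2: "(\<lambda>n. prob (EY n \<inter> space M)) \<longlonglongrightarrow> prob (SX \<inter> space M)"
    by (rule prob_conv[OF IS _ Ds symd Dlim]) (rule sets.Int[OF SXs], simp)
  have e1: "EY n \<inter> space M = EY n" for n unfolding EY_def by auto
  have e2: "SX \<inter> space M = SX" unfolding SX_def by auto
  have "(\<lambda>n. prob (EY n) * prob Z) \<longlonglongrightarrow> prob SX * prob Z"
    by (intro tendsto_mult tendsto_const) (use c2 in \<open>simp only: e1 e2\<close>)
  moreover have "(\<lambda>n. prob (EY n) * prob Z) \<longlonglongrightarrow> prob (SX \<inter> Z)"
    using c1 by (simp only: indep_n)
  ultimately have "prob (SX \<inter> Z) = prob SX * prob Z"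
    by (rule LIMSEQ_unique[rotated])
  moreover have "SX \<inter> Z = {w \<in> space M. (\<forall>h\<le>k. X (u - int h) w = y h) \<and> phi (u + 1) c (inn w) = b}"
    unfolding SX_def Z_def by auto
  ultimately show ?thesis unfolding SX_def Z_def by simp
qed

end

context prob_space
begin

lemma distr_density_countable:
  fixes V :: "'a \<Rightarrow> 'b::countable"
  assumes V[measurable]: "V \<in> measurable M (count_space UNIV)"
  shows "distr M (count_space UNIV) V = density (count_space UNIV) (\<lambda>k. ennreal (prob {w \<in> space M. V w = k}))"
proof (rule measure_eqI_countable[where A=UNIV])
  fix a :: 'b
  have "emeasure (distr M (count_space UNIV) V) {a} = emeasure M (V -` {a} \<inter> space M)"
    by (rule emeasure_distr) auto
  also have "V -` {a} \<inter> space M = {w \<in> space M. V w = a}" by auto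
  also have "emeasure M {w \<in> space M. V w = a} = ennreal (prob {w \<in> space M. V w = a})"
    by (simp add: emeasure_eq_measure)
  also have "\<dots> = emeasure (density (count_space UNIV) (\<lambda>k. ennreal (prob {w \<in> space M. V w = k}))) {a}"
    by (subst emeasure_density) auto
  finally show "emeasure (distr M (count_space UNIV) V) {a} = emeasure (density (count_space UNIV) (\<lambda>k. ennreal (prob {w \<in> space M. V w = k}))) {a}" .
qed auto

lemma integrable_countable_rv:
  fixes V :: "'a \<Rightarrow> 'b::countable" and f :: "'b \<Rightarrow> real"
  assumes V[measurable]: "V \<in> measurable M (count_space UNIV)"
  shows "integrable M (\<lambda>w. f (V w)) \<longleftrightarrow>
           Infinite_Set_Sum.abs_summable_on (\<lambda>k. prob {w \<in> space M. V w = k} * f k) UNIV"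
    and "(\<integral>w. f (V w) \<partial>M) = infsetsum (\<lambda>k. prob {w \<in> space M. V w = k} * f k) UNIV"
proof -
  have fm: "f \<in> borel_measurable (count_space UNIV)" by simp
  have "integrable M (\<lambda>w. f (V w)) \<longleftrightarrow> integrable (distr M (count_space UNIV) V) f"
    by (rule integrable_distr_eq[OF V fm, symmetric])
  also have "\<dots> \<longleftrightarrow> integrable (count_space UNIV) (\<lambda>k. prob {w \<in> space M. V w = k} *\<^sub>R f k)"
    unfolding distr_density_countable[OF V] by (rule integrable_density) auto
  finally show "integrable M (\<lambda>w. f (V w)) \<longleftrightarrow>
           Infinite_Set_Sum.abs_summable_on (\<lambda>k. prob {w \<in> space M. V w = k} * f k) UNIV"
    unfolding abs_summable_on_def by simp
  have "(\<integral>w. f (V w) \<partial>M) = integral\<^sup>L (distr M (count_space UNIV) V) f"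
    by (rule integral_distr[OF V fm, symmetric])
  also have "\<dots> = integral\<^sup>L (count_space UNIV) (\<lambda>k. prob {w \<in> space M. V w = k} *\<^sub>R f k)"
    unfolding distr_density_countable[OF V] by (rule integral_density) auto
  finally show "(\<integral>w. f (V w) \<partial>M) = infsetsum (\<lambda>k. prob {w \<in> space M. V w = k} * f k) UNIV"
    unfolding infsetsum_def by simp
qed

end

context ginar
begin

definition phiG :: "real \<Rightarrow> real" where "phiG s = pp + (1 - pp) / (1 + me * (1 - s))"
definition phiE :: "real \<Rightarrow> real" where "phiE s = 1 / (1 + me * (1 - s))"

lemma pgf_from_sums:
  fixes V :: "'w \<Rightarrow> nat" and q :: "nat \<Rightarrow> real"
  assumes V[measurable]: "V \<in> measurable M (count_space UNIV)"
    and q: "\<And>k. prob {w \<in> space M. V w = k} = q k"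
    and S: "(\<lambda>k. q k * \<bar>s\<bar>^k) sums A" and T: "(\<lambda>k. q k * s^k) sums B"
  shows "integrable M (\<lambda>w. s ^ V w) \<and> (\<integral>w. s ^ V w \<partial>M) = B"
proof -
  have qn: "q k \<ge> 0" for k using q[of k] measure_nonneg by metis
  have "Infinite_Set_Sum.abs_summable_on (\<lambda>k. q k * s^k) UNIV"
    unfolding abs_summable_on_nat_iff using sums_summable[OF S] qn
    by (simp add: abs_mult power_abs)
  then have I: "Infinite_Set_Sum.abs_summable_on (\<lambda>k. prob {w \<in> space M. V w = k} * s^k) UNIV"
    using q by simp
  show ?thesis
  proof
    show "integrable M (\<lambda>w. s ^ V w)" using integrable_countable_rv(1)[OF V, of "\<lambda>k. s^k"] I by simp
    have "(\<integral>w. s ^ V w \<partial>M) = infsetsum (\<lambda>k. q k * s^k) UNIV"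
      using integrable_countable_rv(2)[OF V, of "\<lambda>k. s^k"] q by simp
    also have "\<dots> = (\<Sum>k. q k * s^k)" using I q by (simp add: infsetsum_nat)
    also have "\<dots> = B" using T by (simp add: sums_iff)
    finally show "(\<integral>w. s ^ V w \<partial>M) = B" .
  qed
qed

lemma pgf_G:
  assumes i: "i \<ge> 1" and s: "\<bar>s\<bar> * me < 1 + me"
  shows "integrable M (\<lambda>w. s ^ G t i w) \<and> (\<integral>w. s ^ G t i w \<partial>M) = phiG s"
  unfolding phiG_def
  by (rule pgf_from_sums[OF meas_G G_dist'[OF i]])
     (rule zmg_pgf_sums, use me_pos s in auto)+

lemma pgf_E:
  assumes s: "\<bar>s\<bar> * me < 1 + me"
  shows "integrable M (\<lambda>w. s ^ eps t w) \<and> (\<integral>w. s ^ eps t w \<partial>M) = phiE s"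
  unfolding phiE_def
  by (rule pgf_from_sums[OF meas_eps, where q = "geo_p me"])
     (use eps_dist in \<open>simp add: me_def\<close>, (rule geo_pgf_sums, use me_pos s in auto)+)

lemma pgf_Z:
  assumes s: "\<bar>s\<bar> * me < 1 + me"
  shows "integrable M (\<lambda>w. s ^ phi t a (inn w)) \<and> (\<integral>w. s ^ phi t a (inn w) \<partial>M) = phiG s ^ a * phiE s"
proof -
  define Ia :: "idx set" where "Ia = (\<lambda>i. Inr (t, i)) ` {1..a}"
  define J where "J = insert (Inl t) Ia"
  have nI: "Inl t \<notin> Ia" "finite Ia" unfolding Ia_def by auto
  have J: "finite J" "J \<subseteq> II" unfolding J_def II_def Ia_def by auto
  have ind: "indep_vars (\<lambda>_. borel) (\<lambda>j w. s ^ inn w j) J"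
    using indep_vars_compose2[OF indep_vars_subset[OF indep' J(2)], of "\<lambda>_ n. s ^ n" "\<lambda>_. borel"]
    by simp
  have intJ: "integrable M (\<lambda>w. s ^ inn w j) \<and> (\<integral>w. s ^ inn w j \<partial>M) = (case j of Inl _ \<Rightarrow> phiE s | Inr _ \<Rightarrow> phiG s)"
    if "j \<in> J" for j
    using that pgf_G[OF _ s] pgf_E[OF s] unfolding J_def Ia_def by auto
  have eq: "s ^ phi t a \<omega> = (\<Prod>j\<in>J. s ^ \<omega> j)" for \<omega>
  proof -
    have "(\<Prod>j\<in>J. s ^ \<omega> j) = s ^ \<omega> (Inl t) * (\<Prod>j\<in>Ia. s ^ \<omega> j)"
      unfolding J_def using nI by simp
    also have "(\<Prod>j\<in>Ia. s ^ \<omega> j) = (\<Prod>i\<in>{1..a}. s ^ \<omega> (Inr (t, i)))"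
      unfolding Ia_def by (subst prod.reindex) (auto simp: inj_on_def)
    finally show ?thesis unfolding phi_def by (simp add: power_add power_sum mult.commute)
  qed
  have "integrable M (\<lambda>w. \<Prod>j\<in>J. s ^ inn w j)"
    by (rule indep_vars_integrable[OF J(1) ind]) (use intJ in blast)
  moreover have "(\<integral>w. (\<Prod>j\<in>J. s ^ inn w j) \<partial>M) = (\<Prod>j\<in>J. \<integral>w. s ^ inn w j \<partial>M)"
    by (rule indep_vars_lebesgue_integral[OF J(1) ind]) (use intJ in blast)
  moreover have "(\<Prod>j\<in>J. \<integral>w. s ^ inn w j \<partial>M) = phiG s ^ a * phiE s"
  proof -
    have "(\<Prod>j\<in>J. \<integral>w. s ^ inn w j \<partial>M) = (\<Prod>j\<in>J. (case j of Inl _ \<Rightarrow> phiE s | Inr _ \<Rightarrow> phiG s))"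
      using intJ by (intro prod.cong) auto
    also have "\<dots> = phiE s * (\<Prod>j\<in>Ia. (case j of Inl _ \<Rightarrow> phiE s | Inr _ \<Rightarrow> phiG s))"
      unfolding J_def using nI by simp
    also have "(\<Prod>j\<in>Ia. (case j of Inl _ \<Rightarrow> phiE s | Inr _ \<Rightarrow> phiG s)) = phiG s ^ a"
      unfolding Ia_def by (subst prod.reindex) (auto simp: inj_on_def)
    finally show ?thesis by (simp only: mult.commute)
  qed
  ultimately show ?thesis unfolding eq by simp
qed

end

lemma swap_abs_summable:
  fixes f :: "nat \<Rightarrow> nat \<Rightarrow> real"
  shows "Infinite_Set_Sum.abs_summable_on (\<lambda>(a,b). f b a) UNIV \<longleftrightarrow> Infinite_Set_Sum.abs_summable_on (\<lambda>(a,b). f a b) UNIV"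
proof -
  have bij: "bij_betw (\<lambda>(a::nat,b::nat). (b,a)) UNIV UNIV"
    by (rule bij_betwI[where g="\<lambda>(a,b). (b,a)"]) auto
  have e: "(\<lambda>x. (\<lambda>(a,b). f a b) ((\<lambda>(a,b). (b,a)) x)) = (\<lambda>(a,b). f b a)"
    by (auto simp: fun_eq_iff)
  show ?thesis using abs_summable_on_reindex_bij_betw[OF bij, of "\<lambda>(a,b). f a b"] unfolding e .
qed

lemma swap_infsetsum:
  fixes f :: "nat \<Rightarrow> nat \<Rightarrow> real"
  shows "infsetsum (\<lambda>(a,b). f b a) UNIV = infsetsum (\<lambda>(a,b). f a b) UNIV"
proof -
  have bij: "bij_betw (\<lambda>(a::nat,b::nat). (b,a)) UNIV UNIV"
    by (rule bij_betwI[where g="\<lambda>(a,b). (b,a)"]) auto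
  have e: "(\<lambda>x. (\<lambda>(a,b). f a b) ((\<lambda>(a,b). (b,a)) x)) = (\<lambda>(a,b). f b a)"
    by (auto simp: fun_eq_iff)
  show ?thesis using infsetsum_reindex_bij_betw[OF bij, of "\<lambda>(a,b). f a b"] unfolding e .
qed

context ginar
begin

definition Kt :: "int \<Rightarrow> nat \<Rightarrow> nat \<Rightarrow> real" where
  "Kt t a b = prob {w \<in> space M. phi t a (inn w) = b}"

definition cc :: "int \<Rightarrow> nat \<Rightarrow> nat \<Rightarrow> real" where
  "cc t a b = prob {w \<in> space M. X (t - 1) w = a \<and> X t w = b}"

lemma pair_prob: "cc t a b = geo_p mu a * Kt t a b"
proof -
  have m: "prob {w \<in> space M. (\<forall>h\<le>0. X (t - 1 - int h) w = a) \<and> phi (t - 1 + 1) a (inn w) = b} =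
    prob {w \<in> space M. \<forall>h\<le>0. X (t - 1 - int h) w = a} * prob {w \<in> space M. phi (t - 1 + 1) a (inn w) = b}"
    by (rule markov)
  have e1: "{w \<in> space M. (\<forall>h\<le>0. X (t - 1 - int h) w = a) \<and> phi (t - 1 + 1) a (inn w) = b} =
     {w \<in> space M. X (t - 1) w = a \<and> X t w = b}"
    using X_phi[of _ t] by auto
  have e2: "{w \<in> space M. \<forall>h\<le>0. X (t - 1 - int h) w = a} = {w \<in> space M. X (t - 1) w = a}" by auto
  show ?thesis using m unfolding e1 e2 cc_def Kt_def X_dist by simp
qed

lemma Kt_nonneg: "Kt t a b \<ge> 0" unfolding Kt_def by simp

lemma row_pgf:
  assumes s: "\<bar>s\<bar> * me < 1 + me"
  shows "Infinite_Set_Sum.abs_summable_on (\<lambda>b. Kt t a b * s ^ b) UNIV"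
    and "infsetsum (\<lambda>b. Kt t a b * s ^ b) UNIV = phiG s ^ a * phiE s"
proof -
  have V: "(\<lambda>w. phi t a (inn w)) \<in> measurable M (count_space UNIV)" by measurable
  from pgf_Z[OF s, of t a] have I: "integrable M (\<lambda>w. s ^ phi t a (inn w))"
    and E: "(\<integral>w. s ^ phi t a (inn w) \<partial>M) = phiG s ^ a * phiE s" by auto
  show "Infinite_Set_Sum.abs_summable_on (\<lambda>b. Kt t a b * s ^ b) UNIV"
    using integrable_countable_rv(1)[OF V, of "\<lambda>k. s ^ k"] I unfolding Kt_def by simp
  show "infsetsum (\<lambda>b. Kt t a b * s ^ b) UNIV = phiG s ^ a * phiE s"
    using integrable_countable_rv(2)[OF V, of "\<lambda>k. s ^ k"] E unfolding Kt_def by simp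
qed

lemma phiG_abs:
  assumes s: "\<bar>s\<bar> * me < 1 + me"
  shows "\<bar>phiG s\<bar> \<le> phiG \<bar>s\<bar>" and "phiG \<bar>s\<bar> \<ge> 0"
proof -
  have s': "\<bar>\<bar>s\<bar>\<bar> * me < 1 + me" using s by simp
  from pgf_G[OF order_refl s, of 0] have I: "integrable M (\<lambda>w. s ^ G 0 1 w)" and E: "(\<integral>w. s ^ G 0 1 w \<partial>M) = phiG s"
    by auto
  from pgf_G[OF order_refl s', of 0] have E': "(\<integral>w. \<bar>s\<bar> ^ G 0 1 w \<partial>M) = phiG \<bar>s\<bar>" by auto
  have "norm (\<integral>w. s ^ G 0 1 w \<partial>M) \<le> (\<integral>w. norm (s ^ G 0 1 w) \<partial>M)"
    by (rule integral_norm_bound)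
  then show "\<bar>phiG s\<bar> \<le> phiG \<bar>s\<bar>" using E E' by (simp add: power_abs)
  show "phiG \<bar>s\<bar> \<ge> 0" unfolding E'[symmetric] by (rule integral_nonneg_AE) auto
qed

lemma pair_pgf:
  assumes C1: "\<bar>s1\<bar> * me < 1 + me" and C2: "\<bar>s2\<bar> * phiG \<bar>s1\<bar> * mu < 1 + mu"
  shows "Infinite_Set_Sum.abs_summable_on (\<lambda>(a,b). cc t a b * (s2 ^ a * s1 ^ b)) UNIV"
    and "infsetsum (\<lambda>(a,b). cc t a b * (s2 ^ a * s1 ^ b)) UNIV = phiE s1 / (1 + mu * (1 - s2 * phiG s1))"
proof -
  have C1': "\<bar>\<bar>s1\<bar>\<bar> * me < 1 + me" using C1 by simp
  have pos: "phiG \<bar>s1\<bar> \<ge> 0" using phiG_abs[OF C1] by simp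
  have Eabs: "phiE \<bar>s1\<bar> \<ge> 0"
  proof -
    have "0 \<le> infsetsum (\<lambda>b. Kt t 0 b * \<bar>s1\<bar> ^ b) UNIV"
      by (rule infsetsum_nonneg) (simp add: Kt_nonneg)
    then show ?thesis using row_pgf(2)[OF C1', of t 0] by simp
  qed
  define F where "F = (\<lambda>(a,b). cc t a b * (s2 ^ a * s1 ^ b))"
  have rowF: "(\<lambda>b. F (a, b)) = (\<lambda>b. (geo_p mu a * s2 ^ a) * (Kt t a b * s1 ^ b))" for a
    unfolding F_def pair_prob by (auto simp: fun_eq_iff mult_ac)
  have rownorm: "(\<lambda>b. norm (F (a, b))) = (\<lambda>b. (geo_p mu a * \<bar>s2\<bar> ^ a) * (Kt t a b * \<bar>s1\<bar> ^ b))" for a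
  proof
    fix b
    have "F (a, b) = (geo_p mu a * s2 ^ a) * (Kt t a b * s1 ^ b)"
      unfolding F_def pair_prob by (simp add: mult_ac)
    then show "norm (F (a, b)) = (geo_p mu a * \<bar>s2\<bar> ^ a) * (Kt t a b * \<bar>s1\<bar> ^ b)"
      using geo_p_nonneg[of mu a] mu_pos Kt_nonneg[of t a b] by (simp add: abs_mult power_abs)
  qed
  have rs: "Infinite_Set_Sum.abs_summable_on (\<lambda>b. F (a, b)) UNIV" for a
    unfolding rowF by (rule abs_summable_on_cmult_right, rule row_pgf(1)[OF C1])
  have rsum: "infsetsum (\<lambda>b. norm (F (a, b))) UNIV = phiE \<bar>s1\<bar> * (geo_p mu a * (\<bar>s2\<bar> * phiG \<bar>s1\<bar>) ^ a)" for a
    unfolding rownorm infsetsum_cmult_right[OF row_pgf(1)[OF C1']] row_pgf(2)[OF C1']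
    by (simp add: power_mult_distrib mult_ac)
  have gs: "(\<lambda>a. geo_p mu a * (\<bar>s2\<bar> * phiG \<bar>s1\<bar>) ^ a) sums (1 / (1 + mu * (1 - \<bar>s2\<bar> * phiG \<bar>s1\<bar>)))"
    by (rule geo_pgf_sums) (use mu_pos C2 pos in \<open>auto simp: abs_mult\<close>)
  have colsum: "Infinite_Set_Sum.abs_summable_on (\<lambda>a. infsetsum (\<lambda>b. norm (F (a, b))) UNIV) UNIV"
    unfolding rsum abs_summable_on_nat_iff using Eabs pos geo_p_nonneg[of mu] mu_pos
    by (auto intro!: summable_mult sums_summable[OF gs] simp: abs_mult)
  have FS: "Infinite_Set_Sum.abs_summable_on F (Sigma UNIV (\<lambda>_. UNIV))"
    using rs colsum by (subst abs_summable_on_Sigma_iff) auto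
  then show "Infinite_Set_Sum.abs_summable_on (\<lambda>(a,b). cc t a b * (s2 ^ a * s1 ^ b)) UNIV"
    unfolding F_def by simp
  have "infsetsum F UNIV = infsetsum (\<lambda>a. infsetsum (\<lambda>b. F (a, b)) UNIV) UNIV"
    using infsetsum_Sigma'[of UNIV "\<lambda>_. UNIV" "\<lambda>a b. F (a,b)"] FS by simp
  also have "(\<lambda>a. infsetsum (\<lambda>b. F (a, b)) UNIV) = (\<lambda>a. phiE s1 * (geo_p mu a * (s2 * phiG s1) ^ a))"
    unfolding rowF infsetsum_cmult_right[OF row_pgf(1)[OF C1]] row_pgf(2)[OF C1]
    by (simp add: fun_eq_iff power_mult_distrib mult_ac)
  also have "infsetsum (\<lambda>a. phiE s1 * (geo_p mu a * (s2 * phiG s1) ^ a)) UNIV = phiE s1 / (1 + mu * (1 - s2 * phiG s1))"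
  proof -
    have g2: "(\<lambda>a. geo_p mu a * (s2 * phiG s1) ^ a) sums (1 / (1 + mu * (1 - s2 * phiG s1)))"
    proof (rule geo_pgf_sums)
      have "\<bar>s2 * phiG s1\<bar> \<le> \<bar>s2\<bar> * phiG \<bar>s1\<bar>"
        using phiG_abs(1)[OF C1] by (simp add: abs_mult mult_left_mono)
      then show "\<bar>s2 * phiG s1\<bar> * mu < 1 + mu" using C2 mu_pos
        by (meson le_less_trans mult_right_mono less_imp_le)
    qed (use mu_pos in auto)
    have as: "Infinite_Set_Sum.abs_summable_on (\<lambda>a. phiE s1 * (geo_p mu a * (s2 * phiG s1) ^ a)) UNIV"
    proof -
      have "Infinite_Set_Sum.abs_summable_on (\<lambda>a. infsetsum (\<lambda>b. F (a, b)) UNIV) UNIV"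
        using abs_summable_on_Sigma_project1'[of "\<lambda>a b. F (a,b)" UNIV "\<lambda>_. UNIV"] FS by simp
      also have "(\<lambda>a. infsetsum (\<lambda>b. F (a, b)) UNIV) = (\<lambda>a. phiE s1 * (geo_p mu a * (s2 * phiG s1) ^ a))"
        unfolding rowF infsetsum_cmult_right[OF row_pgf(1)[OF C1]] row_pgf(2)[OF C1]
        by (simp add: fun_eq_iff power_mult_distrib mult_ac)
      finally show ?thesis .
    qed
    have "infsetsum (\<lambda>a. phiE s1 * (geo_p mu a * (s2 * phiG s1) ^ a)) UNIV = (\<Sum>a. phiE s1 * (geo_p mu a * (s2 * phiG s1) ^ a))"
      using infsetsum_nat[OF as] by simp
    also have "\<dots> = phiE s1 * (1 / (1 + mu * (1 - s2 * phiG s1)))"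
      using sums_unique[OF sums_mult[OF g2, of "phiE s1"]] by simp
    finally show ?thesis by simp
  qed
  finally show "infsetsum (\<lambda>(a,b). cc t a b * (s2 ^ a * s1 ^ b)) UNIV = phiE s1 / (1 + mu * (1 - s2 * phiG s1))"
    unfolding F_def .
qed

end

lemma HH_alg:
  fixes me alpha mu s1 s2 g Aa :: real
  assumes me: "me = (1 - alpha) * mu" and Aa: "Aa = 1 + me * (1 - s1)" and Apos: "Aa > 0"
    and g: "g = 1 - alpha * (1 - s1) / Aa" and B: "1 + mu * (1 - s2 * g) > 0"
  shows "(1 / Aa) / (1 + mu * (1 - s2 * g)) = 1 / (1 + mu * ((1 - s1) + (1 - s2) + ((1 - alpha) * mu - alpha) * (1 - s1) * (1 - s2)))"
proof -
  have gA: "g * Aa = Aa - alpha * (1 - s1)" unfolding g using Apos by (simp add: field_simps)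
  have "(1 + mu * (1 - s2 * g)) * Aa = Aa + mu * Aa - mu * s2 * (g * Aa)" by (simp add: algebra_simps)
  also have "\<dots> = Aa + mu * Aa - mu * s2 * (Aa - alpha * (1 - s1))" unfolding gA ..
  also have "\<dots> = 1 + mu * ((1 - s1) + (1 - s2) + ((1 - alpha) * mu - alpha) * (1 - s1) * (1 - s2))"
    unfolding Aa me by (simp add: algebra_simps)
  finally have e: "(1 + mu * (1 - s2 * g)) * Aa = 1 + mu * ((1 - s1) + (1 - s2) + ((1 - alpha) * mu - alpha) * (1 - s1) * (1 - s2))" .
  have "(1 / Aa) / (1 + mu * (1 - s2 * g)) = 1 / ((1 + mu * (1 - s2 * g)) * Aa)" by simp
  then show ?thesis unfolding e .
qed

context ginar
begin

definition dd :: real where "dd = min (1/2) (min (1/(2*me)) (1/(8*mu)))"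

lemma dd_pos: "dd > 0" using me_pos mu_pos by (simp add: dd_def)
lemma dd_half: "dd \<le> 1/2" by (simp add: dd_def)
lemma dd_me: "dd * me \<le> 1/2"
proof -
  have "dd \<le> 1/(2*me)" by (simp add: dd_def)
  then show ?thesis using me_pos by (simp add: field_simps)
qed
lemma dd_mu: "dd * mu \<le> 1/8"
proof -
  have "dd \<le> 1/(8*mu)" by (simp add: dd_def)
  then show ?thesis using mu_pos by (simp add: field_simps)
qed

lemma phiG_alt:
  assumes A: "1 + me * (1 - x) > 0"
  shows "phiG x = 1 + alpha * (x - 1) / (1 + me * (1 - x))"
proof -
  have A': "1 + me * (1 - x) \<noteq> 0" using A by simp
  have "alpha / (me * (1 + me * (1 - x))) - alpha/me = alpha * (x - 1) / (1 + me * (1 - x))"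
    using A' me_pos by (simp add: divide_simps) (simp add: algebra_simps)
  then show ?thesis unfolding phiG_def pp_def using me_pos by simp
qed

lemma cond:
  assumes x: "0 \<le> x" "x < 1 + dd" and y: "0 \<le> y" "y < 1 + dd"
  shows "x * me < 1 + me" and "y * phiG x * mu < 1 + mu"
proof -
  have "x * me \<le> (1 + dd) * me" using x me_pos by (intro mult_right_mono) auto
  also have "\<dots> = me + dd * me" by (simp add: algebra_simps)
  finally show C1: "x * me < 1 + me" using dd_me by linarith
  define A where "A = 1 + me * (1 - x)"
  have A: "A \<ge> 1/2" unfolding A_def using C1 x dd_me me_pos
  proof -
    have "me * x \<le> me * (1 + dd)" using x me_pos by (intro mult_left_mono) auto
    then show "1 + me * (1 - x) \<ge> 1/2" using dd_me by (simp add: algebra_simps)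
  qed
  have pG: "phiG x = 1 + alpha * (x - 1) / A" unfolding A_def by (rule phiG_alt) (use A in \<open>simp add: A_def\<close>)
  have bound: "phiG x \<le> 1 + 2 * dd"
  proof (cases "x \<le> 1")
    case True
    have "alpha * (x - 1) / A \<le> 0"
      using True alpha_pos A by (intro divide_nonpos_pos mult_nonneg_nonpos) auto
    then show ?thesis using pG dd_pos by linarith
  next
    case False
    have "alpha * (x - 1) \<le> x - 1" using False alpha_lt1 by (simp add: mult_left_le_one_le)
    then have "alpha * (x - 1) / A \<le> (x - 1) / A" using A by (intro divide_right_mono) auto
    also have "\<dots> \<le> (x - 1) / (1/2)" using A False by (intro divide_left_mono) auto
    also have "\<dots> < 2 * dd" using x by simp
    finally show ?thesis using pG by linarith
  qed
  show "y * phiG x * mu < 1 + mu"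
  proof (cases "phiG x \<le> 0")
    case True
    then have "y * phiG x * mu \<le> 0" using y mu_pos by (simp add: mult_nonneg_nonpos mult_nonpos_nonneg)
    then show ?thesis using mu_pos by linarith
  next
    case False
    have "y * phiG x \<le> (1 + dd) * (1 + 2 * dd)"
      using y False bound by (intro mult_mono) auto
    also have "\<dots> \<le> 1 + 4 * dd" using dd_half dd_pos by (simp add: algebra_simps power2_eq_square)
    finally have "y * phiG x * mu \<le> (1 + 4 * dd) * mu" using mu_pos by (intro mult_right_mono) auto
    also have "\<dots> = mu + 4 * (dd * mu)" by (simp add: algebra_simps)
    finally show ?thesis using dd_mu by linarith
  qed
qed

definition HH :: "real \<Rightarrow> real \<Rightarrow> real" where
  "HH s1 s2 = 1 / (1 + mu * ((1 - s1) + (1 - s2) + ((1 - alpha) * mu - alpha) * (1 - s1) * (1 - s2)))"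

lemma HH_sym: "HH s1 s2 = HH s2 s1" unfolding HH_def by (simp add: algebra_simps)

lemma HH_eq:
  assumes A: "1 + me * (1 - s1) > 0" and B: "1 + mu * (1 - s2 * phiG s1) > 0"
  shows "phiE s1 / (1 + mu * (1 - s2 * phiG s1)) = HH s1 s2"
proof -
  have e: "alpha * (s1 - 1) = - (alpha * (1 - s1))" by (simp add: algebra_simps)
  have pg: "phiG s1 = 1 - alpha * (1 - s1) / (1 + me * (1 - s1))"
    using phiG_alt[OF A] unfolding e by simp
  show ?thesis unfolding HH_def phiE_def
    by (rule HH_alg[OF me_def refl A pg B])
qed

lemma part1:
  assumes s: "-dd < s1" "s1 < 1 + dd" "-dd < s2" "s2 < 1 + dd"
  shows "integrable M (\<lambda>w. s1 ^ X t w * s2 ^ X (t - 1) w) \<and>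
         (\<integral>w. s1 ^ X t w * s2 ^ X (t - 1) w \<partial>M) = HH s1 s2"
proof -
  have a1: "\<bar>s1\<bar> < 1 + dd" and a2: "\<bar>s2\<bar> < 1 + dd" using s dd_half by auto
  have C1: "\<bar>s1\<bar> * me < 1 + me" and C2: "\<bar>s2\<bar> * phiG \<bar>s1\<bar> * mu < 1 + mu"
    using cond[OF _ a1 _ a2] by auto
  have V: "(\<lambda>w. (X (t - 1) w, X t w)) \<in> measurable M (count_space UNIV)"
    by (rule meas2[OF meas_X meas_X])
  have pe: "(\<lambda>k. prob {w \<in> space M. (X (t - 1) w, X t w) = k} * (case k of (a, b) \<Rightarrow> s2 ^ a * s1 ^ b)) =
        (\<lambda>(a,b). cc t a b * (s2 ^ a * s1 ^ b))"
    by (auto simp: fun_eq_iff cc_def)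
  have fe: "(\<lambda>w. case (X (t - 1) w, X t w) of (a, b) \<Rightarrow> s2 ^ a * s1 ^ b) = (\<lambda>w. s1 ^ X t w * s2 ^ X (t - 1) w)"
    by (auto simp: fun_eq_iff)
  have I: "integrable M (\<lambda>w. s1 ^ X t w * s2 ^ X (t - 1) w)"
    using integrable_countable_rv(1)[OF V, of "\<lambda>(a,b). s2 ^ a * s1 ^ b"] pair_pgf(1)[OF C1 C2, of t]
    unfolding pe fe by simp
  have "(\<integral>w. s1 ^ X t w * s2 ^ X (t - 1) w \<partial>M) = phiE s1 / (1 + mu * (1 - s2 * phiG s1))"
    using integrable_countable_rv(2)[OF V, of "\<lambda>(a,b). s2 ^ a * s1 ^ b"] pair_pgf(2)[OF C1 C2, of t]
    unfolding pe fe by simp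
  also have "\<dots> = HH s1 s2"
  proof (rule HH_eq)
    show "1 + me * (1 - s1) > 0"
    proof -
      have "me * s1 \<le> \<bar>s1\<bar> * me" using me_pos by (simp add: mult.commute)
      then show ?thesis using C1 by (simp add: algebra_simps)
    qed
    have "\<bar>s2 * phiG s1\<bar> \<le> \<bar>s2\<bar> * phiG \<bar>s1\<bar>"
      using phiG_abs(1)[OF C1] by (simp add: abs_mult mult_left_mono)
    then have "\<bar>s2 * phiG s1\<bar> * mu < 1 + mu" using C2 mu_pos
      by (meson le_less_trans mult_right_mono less_imp_le)
    moreover have "s2 * phiG s1 * mu \<le> \<bar>s2 * phiG s1\<bar> * mu" using mu_pos by (intro mult_right_mono) auto
    ultimately show "1 + mu * (1 - s2 * phiG s1) > 0" by (simp add: algebra_simps)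
  qed
  finally show ?thesis using I by simp
qed

lemma gen_sum:
  assumes x: "\<bar>x\<bar> < dd" and y: "\<bar>y\<bar> < dd"
  shows "Infinite_Set_Sum.abs_summable_on (\<lambda>(a,b). cc t a b * x ^ a * y ^ b) UNIV"
    and "infsetsum (\<lambda>(a,b). cc t a b * x ^ a * y ^ b) UNIV = HH y x"
proof -
  have a1: "\<bar>y\<bar> < 1 + dd" and a2: "\<bar>x\<bar> < 1 + dd" using x y by auto
  have C1: "\<bar>y\<bar> * me < 1 + me" and C2: "\<bar>x\<bar> * phiG \<bar>y\<bar> * mu < 1 + mu"
    using cond[OF _ a1 _ a2] by auto
  have eq: "(\<lambda>(a,b). cc t a b * x ^ a * y ^ b) = (\<lambda>(a,b). cc t a b * (x ^ a * y ^ b))"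
    by (auto simp: fun_eq_iff mult.assoc)
  show "Infinite_Set_Sum.abs_summable_on (\<lambda>(a,b). cc t a b * x ^ a * y ^ b) UNIV"
    unfolding eq by (rule pair_pgf(1)[OF C1 C2])
  have "infsetsum (\<lambda>(a,b). cc t a b * x ^ a * y ^ b) UNIV = phiE y / (1 + mu * (1 - x * phiG y))"
    unfolding eq by (rule pair_pgf(2)[OF C1 C2])
  also have "\<dots> = HH y x"
  proof (rule HH_eq)
    show "1 + me * (1 - y) > 0"
    proof -
      have "me * y \<le> \<bar>y\<bar> * me" using me_pos by (simp add: mult.commute)
      then show ?thesis using C1 by (simp add: algebra_simps)
    qed
    have "\<bar>x * phiG y\<bar> \<le> \<bar>x\<bar> * phiG \<bar>y\<bar>"
      using phiG_abs(1)[OF C1] by (simp add: abs_mult mult_left_mono)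
    then have "\<bar>x * phiG y\<bar> * mu < 1 + mu" using C2 mu_pos
      by (meson le_less_trans mult_right_mono less_imp_le)
    moreover have "x * phiG y * mu \<le> \<bar>x * phiG y\<bar> * mu" using mu_pos by (intro mult_right_mono) auto
    ultimately show "1 + mu * (1 - x * phiG y) > 0" by (simp add: algebra_simps)
  qed
  finally show "infsetsum (\<lambda>(a,b). cc t a b * x ^ a * y ^ b) UNIV = HH y x" .
qed

lemma cc_const: "cc t a b = cc 1 a b"
proof -
  have "(\<lambda>(a,b). cc t a b) = (\<lambda>(a,b). cc 1 a b)"
  proof (rule powser2_unique[OF dd_pos])
    fix x y :: real assume x: "\<bar>x\<bar> < dd" and y: "\<bar>y\<bar> < dd"
    show "Infinite_Set_Sum.abs_summable_on (\<lambda>(a, b). (case (a, b) of (a, b) \<Rightarrow> cc t a b) * x ^ a * y ^ b) UNIV"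
      using gen_sum(1)[OF x y, of t] by simp
    show "Infinite_Set_Sum.abs_summable_on (\<lambda>(a, b). (case (a, b) of (a, b) \<Rightarrow> cc 1 a b) * x ^ a * y ^ b) UNIV"
      using gen_sum(1)[OF x y, of 1] by simp
    show "(\<Sum>\<^sub>a(a, b)\<in>UNIV. (case (a, b) of (a, b) \<Rightarrow> cc t a b) * x ^ a * y ^ b) =
         (\<Sum>\<^sub>a(a, b)\<in>UNIV. (case (a, b) of (a, b) \<Rightarrow> cc 1 a b) * x ^ a * y ^ b)"
      using gen_sum(2)[OF x y, of t] gen_sum(2)[OF x y, of 1] by simp
  qed
  from fun_cong[OF this, of "(a,b)"] show ?thesis by simp
qed

lemma cc_sym: "cc t a b = cc t b a"
proof -
  have "(\<lambda>(a,b). cc t a b) = (\<lambda>(a,b). cc t b a)"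
  proof (rule powser2_unique[OF dd_pos])
    fix x y :: real assume x: "\<bar>x\<bar> < dd" and y: "\<bar>y\<bar> < dd"
    have f1: "(\<lambda>(a,b). (\<lambda>p q. cc t p q * y ^ p * x ^ q) b a) = (\<lambda>(a, b). (case (a, b) of (a, b) \<Rightarrow> cc t b a) * x ^ a * y ^ b)"
      by (auto simp: fun_eq_iff mult_ac)
    have f2: "(\<lambda>(a,b). (\<lambda>p q. cc t p q * y ^ p * x ^ q) a b) = (\<lambda>(a,b). cc t a b * y ^ a * x ^ b)"
      by (auto simp: fun_eq_iff)
    show "Infinite_Set_Sum.abs_summable_on (\<lambda>(a, b). (case (a, b) of (a, b) \<Rightarrow> cc t a b) * x ^ a * y ^ b) UNIV"
      using gen_sum(1)[OF x y, of t] by simp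
    have "Infinite_Set_Sum.abs_summable_on (\<lambda>(a,b). (\<lambda>p q. cc t p q * y ^ p * x ^ q) b a) UNIV"
      using swap_abs_summable[of "\<lambda>p q. cc t p q * y ^ p * x ^ q"] gen_sum(1)[OF y x, of t] by simp
    then show "Infinite_Set_Sum.abs_summable_on (\<lambda>(a, b). (case (a, b) of (a, b) \<Rightarrow> cc t b a) * x ^ a * y ^ b) UNIV"
      unfolding f1 .
    have "infsetsum (\<lambda>(a,b). (\<lambda>p q. cc t p q * y ^ p * x ^ q) b a) UNIV = HH x y"
      using swap_infsetsum[of "\<lambda>p q. cc t p q * y ^ p * x ^ q"] gen_sum(2)[OF y x, of t] by simp
    then have R: "infsetsum (\<lambda>(a, b). (case (a, b) of (a, b) \<Rightarrow> cc t b a) * x ^ a * y ^ b) UNIV = HH x y"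
      unfolding f1 .
    have L: "infsetsum (\<lambda>(a, b). (case (a, b) of (a, b) \<Rightarrow> cc t a b) * x ^ a * y ^ b) UNIV = HH y x"
      using gen_sum(2)[OF x y, of t] by simp
    show "(\<Sum>\<^sub>a(a, b)\<in>UNIV. (case (a, b) of (a, b) \<Rightarrow> cc t a b) * x ^ a * y ^ b) =
         (\<Sum>\<^sub>a(a, b)\<in>UNIV. (case (a, b) of (a, b) \<Rightarrow> cc t b a) * x ^ a * y ^ b)"
      unfolding L R by (rule HH_sym)
  qed
  from fun_cong[OF this, of "(a,b)"] show ?thesis by simp
qed

end

lemma meas_list:
  fixes f :: "nat \<Rightarrow> 'a \<Rightarrow> 'b::countable"
  assumes "\<And>j. f j \<in> measurable N (count_space UNIV)"
  shows "(\<lambda>w. map (\<lambda>j. f j w) xs) \<in> measurable N (count_space UNIV)"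
proof (induction xs)
  case Nil then show ?case by simp
next
  case (Cons a xs)
  have "(\<lambda>w. f a w # map (\<lambda>j. f j w) xs) \<in> measurable N (count_space UNIV)"
    by (rule meas2[OF assms Cons.IH, where h="(#)"])
  then show ?case by simp
qed

lemma all_le_Suc: "(\<forall>j\<le>Suc m. P j) \<longleftrightarrow> (\<forall>j\<le>m. P j) \<and> P (Suc m)"
  by (auto simp: le_Suc_eq)

context ginar
begin

definition Kc :: "nat \<Rightarrow> nat \<Rightarrow> real" where "Kc a b = cc 1 a b / geo_p mu a"

lemma Kt_Kc: "Kt t a b = Kc a b"
proof -
  have "cc t a b = geo_p mu a * Kt t a b" by (rule pair_prob)
  then show ?thesis unfolding Kc_def cc_const[of t] using geo_p_pos[OF mu_pos, of a] by (simp add: field_simps)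
qed

lemma DB: "geo_p mu a * Kc a b = geo_p mu b * Kc b a"
  unfolding Kc_def using geo_p_pos[OF mu_pos, of a] geo_p_pos[OF mu_pos, of b] cc_sym[of 1 a b] by simp

lemma reidx:
  "(\<forall>h\<le>m. X (u + int m - int h) w = x (m - h)) \<longleftrightarrow> (\<forall>j\<le>m. X (u + int j) w = x j)"
proof
  assume H: "\<forall>h\<le>m. X (u + int m - int h) w = x (m - h)"
  show "\<forall>j\<le>m. X (u + int j) w = x j"
  proof (intro allI impI)
    fix j assume j: "j \<le> m"
    show "X (u + int j) w = x j" using spec[OF H, of "m - j"] j by (simp add: of_nat_diff)
  qed
next
  assume H: "\<forall>j\<le>m. X (u + int j) w = x j"
  show "\<forall>h\<le>m. X (u + int m - int h) w = x (m - h)"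
  proof (intro allI impI)
    fix h assume h: "h \<le> m"
    then have "X (u + int (m - h)) w = x (m - h)" using spec[OF H, of "m - h"] by simp
    then show "X (u + int m - int h) w = x (m - h)" using h by (simp add: of_nat_diff algebra_simps)
  qed
qed

lemma block:
  "prob {w \<in> space M. \<forall>j\<le>m. X (u + int j) w = x j} = geo_p mu (x 0) * (\<Prod>j<m. Kc (x j) (x (Suc j)))"
proof (induction m)
  case 0
  have "{w \<in> space M. \<forall>j\<le>0. X (u + int j) w = x j} = {w \<in> space M. X u w = x 0}" by auto
  then show ?case using X_dist by simp
next
  case (Suc m)
  have e1: "{w \<in> space M. \<forall>j\<le>Suc m. X (u + int j) w = x j} =
     {w \<in> space M. (\<forall>h\<le>m. X (u + int m - int h) w = x (m - h)) \<and> phi (u + int m + 1) (x m) (inn w) = x (Suc m)}"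
  proof (rule set_eqI)
    fix w
    show "w \<in> {w \<in> space M. \<forall>j\<le>Suc m. X (u + int j) w = x j} \<longleftrightarrow>
      w \<in> {w \<in> space M. (\<forall>h\<le>m. X (u + int m - int h) w = x (m - h)) \<and> phi (u + int m + 1) (x m) (inn w) = x (Suc m)}"
    proof (cases "w \<in> space M")
      case True
      have xp: "X (u + int m + 1) w = phi (u + int m + 1) (X (u + int m) w) (inn w)"
        using X_phi[OF True, of "u + int m + 1"] by simp
      have sm: "u + int (Suc m) = u + int m + 1" by simp
      have "(\<forall>j\<le>Suc m. X (u + int j) w = x j) \<longleftrightarrow> (\<forall>j\<le>m. X (u + int j) w = x j) \<and> X (u + int (Suc m)) w = x (Suc m)"
        by (rule all_le_Suc)
      then have "(\<forall>j\<le>Suc m. X (u + int j) w = x j) \<longleftrightarrow> (\<forall>j\<le>m. X (u + int j) w = x j) \<and> X (u + int m + 1) w = x (Suc m)"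
        unfolding sm .
      then show ?thesis using True reidx[of m u w x] xp by auto
    qed simp
  qed
  have "prob {w \<in> space M. (\<forall>h\<le>m. X (u + int m - int h) w = x (m - h)) \<and> phi (u + int m + 1) (x m) (inn w) = x (Suc m)} =
     prob {w \<in> space M. \<forall>h\<le>m. X (u + int m - int h) w = x (m - h)} * prob {w \<in> space M. phi (u + int m + 1) (x m) (inn w) = x (Suc m)}"
    by (rule markov)
  also have "{w \<in> space M. \<forall>h\<le>m. X (u + int m - int h) w = x (m - h)} = {w \<in> space M. \<forall>j\<le>m. X (u + int j) w = x j}"
    using reidx[of m u _ x] by auto
  also have "prob {w \<in> space M. phi (u + int m + 1) (x m) (inn w) = x (Suc m)} = Kc (x m) (x (Suc m))"
    using Kt_Kc unfolding Kt_def by simp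
  finally show ?case unfolding e1 Suc.IH by (simp add: mult.assoc)
qed

lemma chain_rev:
  "geo_p mu (x 0) * (\<Prod>j<m. Kc (x j) (x (Suc j))) = geo_p mu (x m) * (\<Prod>j<m. Kc (x (Suc j)) (x j))"
proof (induction m)
  case 0 then show ?case by simp
next
  case (Suc m)
  have "geo_p mu (x 0) * (\<Prod>j<Suc m. Kc (x j) (x (Suc j))) = (geo_p mu (x 0) * (\<Prod>j<m. Kc (x j) (x (Suc j)))) * Kc (x m) (x (Suc m))"
    by (simp add: mult.assoc)
  also have "\<dots> = (geo_p mu (x m) * Kc (x m) (x (Suc m))) * (\<Prod>j<m. Kc (x (Suc j)) (x j))"
    unfolding Suc.IH by (simp add: mult_ac)
  also have "\<dots> = geo_p mu (x (Suc m)) * (\<Prod>j<Suc m. Kc (x (Suc j)) (x j))"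
  proof -
    have d: "geo_p mu (x m) * Kc (x m) (x (Suc m)) = geo_p mu (x (Suc m)) * Kc (x (Suc m)) (x m)" by (rule DB)
    show ?thesis unfolding d by (simp add: mult_ac)
  qed
  finally show ?case .
qed

lemma block_rev:
  "prob {w \<in> space M. \<forall>j\<le>m. X (v + int m - int j) w = x j} = prob {w \<in> space M. \<forall>j\<le>m. X (u + int j) w = x j}"
proof -
  have "{w \<in> space M. \<forall>j\<le>m. X (v + int m - int j) w = x j} = {w \<in> space M. \<forall>j\<le>m. X (v + int j) w = x (m - j)}"
  proof -
    have "(\<forall>j\<le>m. X (v + int m - int j) w = x j) \<longleftrightarrow> (\<forall>j\<le>m. X (v + int j) w = x (m - j))" for w
      using reidx[of m v w "\<lambda>j. x (m - j)"] by (auto simp: Suc_diff_le)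
    then show ?thesis by auto
  qed
  then have "prob {w \<in> space M. \<forall>j\<le>m. X (v + int m - int j) w = x j} =
      geo_p mu (x m) * (\<Prod>j<m. Kc (x (m - j)) (x (m - Suc j)))"
    using block[of m v "\<lambda>j. x (m - j)"] by simp
  also have "(\<Prod>j<m. Kc (x (m - j)) (x (m - Suc j))) = (\<Prod>j<m. Kc (x (Suc j)) (x j))"
  proof -
    have "(\<Prod>j<m. Kc (x (m - j)) (x (m - Suc j))) = (\<Prod>j<m. (\<lambda>i. Kc (x (Suc i)) (x i)) (m - Suc j))"
      by (rule prod.cong) (auto simp: Suc_diff_Suc)
    also have "\<dots> = (\<Prod>j<m. Kc (x (Suc j)) (x j))" by (rule prod.nat_diff_reindex)
    finally show ?thesis .
  qed
  also have "geo_p mu (x m) * (\<Prod>j<m. Kc (x (Suc j)) (x j)) = prob {w \<in> space M. \<forall>j\<le>m. X (u + int j) w = x j}"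
    unfolding block chain_rev ..
  finally show ?thesis .
qed

lemma map_eq_iff_all:
  "(map f [0..<Suc m] = l) \<longleftrightarrow> length l = Suc m \<and> (\<forall>j\<le>m. f j = l ! j)"
  by (auto simp: list_eq_iff_nth_eq less_Suc_eq_le simp del: upt_Suc)

lemma distr_block_eq:
  "distr M (count_space UNIV) (\<lambda>w. map (\<lambda>j. X (u + int j) w) [0..<Suc m]) =
   distr M (count_space UNIV) (\<lambda>w. map (\<lambda>j. X (v + int m - int j) w) [0..<Suc m])"
proof (rule measure_eqI_countable[where A=UNIV])
  have mB: "(\<lambda>w. map (\<lambda>j. X (u + int j) w) [0..<Suc m]) \<in> measurable M (count_space UNIV)"
    by (rule meas_list) simp
  have mR: "(\<lambda>w. map (\<lambda>j. X (v + int m - int j) w) [0..<Suc m]) \<in> measurable M (count_space UNIV)"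
    by (rule meas_list) simp
  fix l :: "nat list"
  have "emeasure (distr M (count_space UNIV) (\<lambda>w. map (\<lambda>j. X (u + int j) w) [0..<Suc m])) {l} =
        emeasure M {w \<in> space M. map (\<lambda>j. X (u + int j) w) [0..<Suc m] = l}"
    by (subst emeasure_distr[OF mB]) (auto intro!: arg_cong[where f="emeasure M"])
  also have "\<dots> = emeasure M {w \<in> space M. map (\<lambda>j. X (v + int m - int j) w) [0..<Suc m] = l}"
  proof (cases "length l = Suc m")
    case True
    have "prob {w \<in> space M. \<forall>j\<le>m. X (v + int m - int j) w = l ! j} = prob {w \<in> space M. \<forall>j\<le>m. X (u + int j) w = l ! j}"
      by (rule block_rev)
    then show ?thesis using True by (simp add: map_eq_iff_all emeasure_eq_measure del: upt_Suc)
  next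
    case False
    then show ?thesis by (simp add: map_eq_iff_all del: upt_Suc)
  qed
  also have "\<dots> = emeasure (distr M (count_space UNIV) (\<lambda>w. map (\<lambda>j. X (v + int m - int j) w) [0..<Suc m])) {l}"
    by (subst emeasure_distr[OF mR]) (auto intro!: arg_cong[where f="emeasure M"])
  finally show "emeasure (distr M (count_space UNIV) (\<lambda>w. map (\<lambda>j. X (u + int j) w) [0..<Suc m])) {l} =
    emeasure (distr M (count_space UNIV) (\<lambda>w. map (\<lambda>j. X (v + int m - int j) w) [0..<Suc m])) {l}" .
qed auto

lemma part2: "distr M (count_space UNIV) (\<lambda>w. (X t w, X (t - 1) w)) = distr M (count_space UNIV) (\<lambda>w. (X (t - 1) w, X t w))"
proof -
  let ?B = "\<lambda>w. map (\<lambda>j. X (t - 1 + int j) w) [0..<Suc 1]"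
  let ?R = "\<lambda>w. map (\<lambda>j. X (t - 1 + int 1 - int j) w) [0..<Suc 1]"
  let ?g = "\<lambda>l::nat list. (l ! 1, l ! 0)"
  have mB: "?B \<in> measurable M (count_space UNIV)" by (rule meas_list) simp
  have mR: "?R \<in> measurable M (count_space UNIV)" by (rule meas_list) simp
  have mg: "?g \<in> measurable (count_space UNIV) (count_space UNIV)" by simp
  have e1: "(\<lambda>w. (X t w, X (t - 1) w)) = ?g \<circ> ?B" by (auto simp: fun_eq_iff upt_rec)
  have e2: "(\<lambda>w. (X (t - 1) w, X t w)) = ?g \<circ> ?R" by (auto simp: fun_eq_iff upt_rec)
  have "distr M (count_space UNIV) (?g \<circ> ?B) = distr (distr M (count_space UNIV) ?B) (count_space UNIV) ?g"
    by (rule distr_distr[OF mg mB, symmetric])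
  also have "distr M (count_space UNIV) ?B = distr M (count_space UNIV) ?R"
    by (rule distr_block_eq)
  also have "distr (distr M (count_space UNIV) ?R) (count_space UNIV) ?g = distr M (count_space UNIV) (?g \<circ> ?R)"
    by (rule distr_distr[OF mg mR])
  finally show ?thesis unfolding e1 e2 .
qed

lemma part3:
  fixes n :: nat and ts :: "nat \<Rightarrow> int"
  assumes ts: "strict_mono_on {..<n} ts"
  shows "distr M (Pi\<^sub>M {..<n} (\<lambda>_. count_space UNIV)) (\<lambda>w. \<lambda>i\<in>{..<n}. X (ts i) w) =
         distr M (Pi\<^sub>M {..<n} (\<lambda>_. count_space UNIV)) (\<lambda>w. \<lambda>i\<in>{..<n}. X (\<tau> - ts i) w)"
proof (cases "n = 0")
  case True
  have "(\<lambda>w. \<lambda>i\<in>{..<n}. X (ts i) w) = (\<lambda>w. \<lambda>i\<in>{..<n}. X (\<tau> - ts i) w)"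
    using True by (auto simp: fun_eq_iff restrict_def)
  then show ?thesis by simp
next
  case False
  define t0 where "t0 = ts 0"
  define m where "m = nat (ts (n - 1) - ts 0)"
  define v where "v = \<tau> - ts (n - 1)"
  have mono: "ts 0 \<le> ts i \<and> ts i \<le> ts (n - 1)" if "i < n" for i
    using that False strict_mono_on_leD[OF ts] by auto
  then have m_int: "int m = ts (n - 1) - ts 0" unfolding m_def using False by auto
  let ?B = "\<lambda>w. map (\<lambda>j. X (t0 + int j) w) [0..<Suc m]"
  let ?R = "\<lambda>w. map (\<lambda>j. X (v + int m - int j) w) [0..<Suc m]"
  let ?g = "\<lambda>l::nat list. \<lambda>i\<in>{..<n}. l ! nat (ts i - t0)"
  let ?P = "Pi\<^sub>M {..<n} (\<lambda>_. count_space (UNIV :: nat set))"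
  have mB: "?B \<in> measurable M (count_space UNIV)" by (rule meas_list) simp
  have mR: "?R \<in> measurable M (count_space UNIV)" by (rule meas_list) simp
  have mg: "?g \<in> measurable (count_space UNIV) ?P" by (simp add: space_PiM)
  have idx: "nat (ts i - t0) < Suc m" "int (nat (ts i - t0)) = ts i - t0" if "i < n" for i
    using mono[OF that] m_int unfolding t0_def by auto
  have e1: "(\<lambda>w. \<lambda>i\<in>{..<n}. X (ts i) w) = ?g \<circ> ?B"
  proof
    fix w
    have "(map (\<lambda>j. X (t0 + int j) w) [0..<Suc m]) ! nat (ts i - t0) = X (ts i) w" if "i < n" for i
      using idx[OF that] by (simp del: upt_Suc)
    then show "(\<lambda>i\<in>{..<n}. X (ts i) w) = (?g \<circ> ?B) w"
      by (auto intro!: restrict_ext simp del: upt_Suc)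
  qed
  have e2: "(\<lambda>w. \<lambda>i\<in>{..<n}. X (\<tau> - ts i) w) = ?g \<circ> ?R"
  proof
    fix w
    have "X (\<tau> - ts i) w = X (v + int m - int (nat (ts i - t0))) w" if "i < n" for i
    proof -
      have a: "int (nat (ts i - t0)) = ts i - t0" by (rule idx(2)[OF that])
      have b: "v + int m - (ts i - t0) = \<tau> - ts i" unfolding v_def t0_def m_int by simp
      show ?thesis unfolding a b ..
    qed
    moreover have "(map (\<lambda>j. X (v + int m - int j) w) [0..<Suc m]) ! nat (ts i - t0) = X (v + int m - int (nat (ts i - t0))) w" if "i < n" for i
      using idx[OF that] by (simp del: upt_Suc)
    ultimately show "(\<lambda>i\<in>{..<n}. X (\<tau> - ts i) w) = (?g \<circ> ?R) w"
      by (auto intro!: restrict_ext simp del: upt_Suc)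
  qed
  have "distr M ?P (?g \<circ> ?B) = distr (distr M (count_space UNIV) ?B) ?P ?g"
    by (rule distr_distr[OF mg mB, symmetric])
  also have "distr M (count_space UNIV) ?B = distr M (count_space UNIV) ?R"
    by (rule distr_block_eq)
  also have "distr (distr M (count_space UNIV) ?R) ?P ?g = distr M ?P (?g \<circ> ?R)"
    by (rule distr_distr[OF mg mR])
  finally show ?thesis unfolding e1 e2 .
qed

end

theorem mainTheorem10:
  fixes M :: "'w measure" and mu alpha :: real
    and eps :: "int \<Rightarrow> 'w \<Rightarrow> nat" and G :: "int \<Rightarrow> nat \<Rightarrow> 'w \<Rightarrow> nat" and X :: "int \<Rightarrow> 'w \<Rightarrow> nat"
  assumes "mu > 0" and "0 < alpha" and "alpha < 1"
    and "geo_inar1 M mu alpha eps G X"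
  shows "(\<exists>\<delta>>0. \<forall>t s1 s2. -\<delta> < s1 \<and> s1 < 1 + \<delta> \<and> -\<delta> < s2 \<and> s2 < 1 + \<delta> \<longrightarrow>
            integrable M (\<lambda>w. s1 ^ X t w * s2 ^ X (t - 1) w) \<and>
            (\<integral>w. s1 ^ X t w * s2 ^ X (t - 1) w \<partial>M) =
              1 / (1 + mu * ((1 - s1) + (1 - s2) + ((1 - alpha) * mu - alpha) * (1 - s1) * (1 - s2))))
    \<and> (\<forall>t. distr M (count_space UNIV) (\<lambda>w. (X t w, X (t - 1) w)) =
           distr M (count_space UNIV) (\<lambda>w. (X (t - 1) w, X t w)))
    \<and> (\<forall>(n::nat) (ts :: nat \<Rightarrow> int) \<tau>. strict_mono_on {..<n} ts \<longrightarrow>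
         distr M (Pi\<^sub>M {..<n} (\<lambda>_. count_space UNIV)) (\<lambda>w. \<lambda>i\<in>{..<n}. X (ts i) w) =
         distr M (Pi\<^sub>M {..<n} (\<lambda>_. count_space UNIV)) (\<lambda>w. \<lambda>i\<in>{..<n}. X (\<tau> - ts i) w))"
proof -
  note A = assms(4)[unfolded geo_inar1_def Let_def]
  note A1 = A[THEN conjunct1]
  note A2 = A[THEN conjunct2, THEN conjunct1]
  note A3 = A[THEN conjunct2, THEN conjunct2, THEN conjunct1]
  note A4 = A[THEN conjunct2, THEN conjunct2, THEN conjunct2, THEN conjunct1]
  note A5 = A[THEN conjunct2, THEN conjunct2, THEN conjunct2, THEN conjunct2, THEN conjunct1]
  note A6 = A[THEN conjunct2, THEN conjunct2, THEN conjunct2, THEN conjunct2, THEN conjunct2, THEN conjunct1]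
  note A7 = A[THEN conjunct2, THEN conjunct2, THEN conjunct2, THEN conjunct2, THEN conjunct2, THEN conjunct2, THEN conjunct1]
  note A8 = A[THEN conjunct2, THEN conjunct2, THEN conjunct2, THEN conjunct2, THEN conjunct2, THEN conjunct2, THEN conjunct2, THEN conjunct1]
  note A10 = A[THEN conjunct2, THEN conjunct2, THEN conjunct2, THEN conjunct2, THEN conjunct2, THEN conjunct2, THEN conjunct2, THEN conjunct2, THEN conjunct2]
  interpret P: prob_space M by (rule A1)
  interpret g: ginar M mu alpha eps G X
  proof (rule ginar.intro, rule P.prob_space_axioms, rule ginar_axioms.intro)
    show "0 < mu" "0 < alpha" "alpha < 1" by (rule assms)+
    show "\<And>t. X t \<in> M \<rightarrow>\<^sub>M count_space UNIV" using A2 by blast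
    show "\<And>t. eps t \<in> M \<rightarrow>\<^sub>M count_space UNIV" using A3 by blast
    show "\<And>t i. G t i \<in> M \<rightarrow>\<^sub>M count_space UNIV" using A4 by blast
    show "\<And>t k. measure M {w \<in> space M. eps t w = k} = geo_p ((1 - alpha) * mu) k" using A5 by blast
    show "\<And>t i k. 1 \<le> i \<Longrightarrow> measure M {w \<in> space M. G t i w = k} = zmg_p (1 - alpha / ((1 - alpha) * mu)) ((1 - alpha) * mu) k"
      using A6 by blast
    show "P.indep_vars (\<lambda>_. count_space UNIV) (\<lambda>j. case j of Inl t \<Rightarrow> eps t | Inr (t, i) \<Rightarrow> G t i) (range Inl \<union> Inr ` (UNIV \<times> {1..}))"
      by (rule A7)
    show "\<And>t w. w \<in> space M \<Longrightarrow> X t w = (\<Sum>i = 1..X (t - 1) w. G t i w) + eps t w" using A8 by blast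
    show "\<And>t k. measure M {w \<in> space M. X t w = k} = geo_p mu k" using A10 by blast
  qed
  show ?thesis
  proof (intro conjI allI impI)
    show "\<exists>\<delta>>0. \<forall>t s1 s2. -\<delta> < s1 \<and> s1 < 1 + \<delta> \<and> -\<delta> < s2 \<and> s2 < 1 + \<delta> \<longrightarrow>
            integrable M (\<lambda>w. s1 ^ X t w * s2 ^ X (t - 1) w) \<and>
            (\<integral>w. s1 ^ X t w * s2 ^ X (t - 1) w \<partial>M) =
              1 / (1 + mu * ((1 - s1) + (1 - s2) + ((1 - alpha) * mu - alpha) * (1 - s1) * (1 - s2)))"
    proof (rule exI[of _ g.dd], rule conjI[OF g.dd_pos], intro allI impI)
      fix t s1 s2 assume H: "- g.dd < s1 \<and> s1 < 1 + g.dd \<and> - g.dd < s2 \<and> s2 < 1 + g.dd"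
      then have h: "- g.dd < s1" "s1 < 1 + g.dd" "- g.dd < s2" "s2 < 1 + g.dd" by auto
      show "integrable M (\<lambda>w. s1 ^ X t w * s2 ^ X (t - 1) w) \<and>
            (\<integral>w. s1 ^ X t w * s2 ^ X (t - 1) w \<partial>M) =
              1 / (1 + mu * ((1 - s1) + (1 - s2) + ((1 - alpha) * mu - alpha) * (1 - s1) * (1 - s2)))"
        using g.part1[OF h, of t] unfolding g.HH_def .
    qed
    show "distr M (count_space UNIV) (\<lambda>w. (X t w, X (t - 1) w)) =
           distr M (count_space UNIV) (\<lambda>w. (X (t - 1) w, X t w))" for t
      by (rule g.part2)
    show "distr M (Pi\<^sub>M {..<n} (\<lambda>_. count_space UNIV)) (\<lambda>w. \<lambda>i\<in>{..<n}. X (ts i) w) =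
         distr M (Pi\<^sub>M {..<n} (\<lambda>_. count_space UNIV)) (\<lambda>w. \<lambda>i\<in>{..<n}. X (\<tau> - ts i) w)"
      if "strict_mono_on {..<n} ts" for n :: nat and ts :: "nat \<Rightarrow> int" and \<tau>
      by (rule g.part3[OF that])
  qed
qed

end
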